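(* Let $d\ge 2$ and consider a translation-invariant, nearest-neighbor, frustration free quantum spin chain on $\mathbb{Z}$ with single-site spaces $\mathcal{H}_x=\mathbb{C}^d$, a fixed positive two-site interaction $h(x,x+1)\ge 0$, and local Hamiltonians $H(c,d)=\sum_{x=c}^{d-1}h(x,x+1)$ (notation as in the context). Suppose that $\varepsilon_{m,n}<1/2$ for some integers $n\ge m\ge 1$. Let $N\ge 2$ and $\psi\in\mathcal{G}(1,N)^\perp\subset \mathcal{H}_{[1,N]}$, and define $$\psi_1=(1-G(1,N-n))\psi,\qquad \psi_2=G(1,N-n)\psi,$$ so that $\psi=\psi_1+\psi_2$ (if $N\le n+1$, then $\psi_1=0$ and $\psi_2=\psi$). Then $$\langle\psi, H(1,N)\psi\rangle\ \ge\ \gamma_{m+n}\big(\alpha(\varepsilon_{m,n})\|\psi_1\|^2+\beta(\varepsilon_{m,n})\|\psi_2\|^2\big),$$ where $\alpha(\varepsilon)=(\sqrt{1-\varepsilon}-\sqrt{\varepsilon})^2$ and $\beta(\varepsilon)=\sqrt{1-\varepsilon}\,(\sqrt{1-\varepsilon}-\sqrt{\varepsilon})$.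
   Context: Setting: for each $x\in\mathbb{Z}$, $\mathcal{H}_x=\mathbb{C}^d$, and for a finite $\Lambda\subset\mathbb{Z}$, $\mathcal{H}_\Lambda=\bigotimes_{x\in\Lambda}\mathcal{H}_x$. A fixed positive operator $h$ on $\mathbb{C}^d\otimes\mathbb{C}^d$ gives $h(x,x+1)$ acting on sites $x,x+1$. For integers $c\le d$, $H(c,d)=\sum_{x=c}^{d-1}h(x,x+1)$, viewed as an operator on $\mathcal{H}_\Lambda$ for any interval $\Lambda\supset[c,d]$ (tensored with the identity elsewhere); $H(c,c)=0$. Frustration free means $\mathcal{G}(c,d):=\operatorname{Ker}H(c,d)\ne\{0\}$ for every interval $[c,d]$. $G(c,d)$ denotes the orthogonal projection onto $\mathcal{G}(c,d)$ (so $G(c,c)=1$; and by convention $G(1,k)=1$ for $k\le 1$). For $c<d$, the spectral gap $\gamma(c,d)$ is the largest number with $H(c,d)\ge\gamma(c,d)(1-G(c,d))$; it depends only on $d-c+1$. Set $\gamma_N=\min_{2\le k\le N}\gamma(1,k)$. For $m,n\ge 1$, on any $\mathcal{H}_{[a,b]}$ with $a\le -m$, $b\ge n$, define $$\varepsilon(m,n)=\sup\{\langle\psi,G(0,n)\psi\rangle:\ \psi\in\mathcal{G}(-m,0),\ \psi\in\mathcal{G}(-m,n)^\perp,\ \|\psi\|=1\},$$ (independent of $a,b$ and translation invariant), and $\varepsilon_{m,n}=\sup_{m'\ge m}\varepsilon(m',n)$. *)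

theory Defs
  imports Complex_Main
begin

text \<open>Spin chain with single-site space C^D (D = the paper's d).
  A basis vector of H_[a,b] is a configuration sigma :: int => nat with sigma x < D
  for x in [a,b] and sigma x = 0 outside [a,b]. Vectors of H_[a,b] are complex
  functions on configurations vanishing outside this finite set.\<close>

type_synonym cfg = "int \<Rightarrow> nat"
type_synonym vec = "cfg \<Rightarrow> complex"

definition cfgs :: "nat \<Rightarrow> int \<Rightarrow> int \<Rightarrow> cfg set" where
  "cfgs D a b = {\<sigma>. (\<forall>x. a \<le> x \<and> x \<le> b \<longrightarrow> \<sigma> x < D) \<and> (\<forall>x. \<not> (a \<le> x \<and> x \<le> b) \<longrightarrow> \<sigma> x = 0)}"

definition vecs :: "nat \<Rightarrow> int \<Rightarrow> int \<Rightarrow> vec set" where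
  "vecs D a b = {f. \<forall>\<sigma>. \<sigma> \<notin> cfgs D a b \<longrightarrow> f \<sigma> = 0}"

definition inner_sp :: "nat \<Rightarrow> int \<Rightarrow> int \<Rightarrow> vec \<Rightarrow> vec \<Rightarrow> complex" where
  "inner_sp D a b f g = (\<Sum>\<sigma>\<in>cfgs D a b. cnj (f \<sigma>) * g \<sigma>)"

definition norm_sp :: "nat \<Rightarrow> int \<Rightarrow> int \<Rightarrow> vec \<Rightarrow> real" where
  "norm_sp D a b f = sqrt (Re (inner_sp D a b f f))"

text \<open>The two-site interaction h on C^D (x) C^D is given by its matrix
  hm i j k l = < e_i (x) e_j , h (e_k (x) e_l) >, for i,j,k,l < D.
  h is a positive operator: <v, h v> is real and nonnegative for every v.\<close>

definition positive_int :: "nat \<Rightarrow> (nat \<Rightarrow> nat \<Rightarrow> nat \<Rightarrow> nat \<Rightarrow> complex) \<Rightarrow> bool" where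
  "positive_int D hm = (\<forall>v :: nat \<Rightarrow> nat \<Rightarrow> complex.
     let q = (\<Sum>i<D. \<Sum>j<D. \<Sum>k<D. \<Sum>l<D. cnj (v i j) * hm i j k l * v k l)
     in Im q = 0 \<and> Re q \<ge> 0)"

definition bond :: "nat \<Rightarrow> (nat \<Rightarrow> nat \<Rightarrow> nat \<Rightarrow> nat \<Rightarrow> complex) \<Rightarrow> int \<Rightarrow> int \<Rightarrow> int \<Rightarrow> vec \<Rightarrow> vec" where
  "bond D hm a b x f = (\<lambda>\<sigma>. if \<sigma> \<in> cfgs D a b then
      (\<Sum>k<D. \<Sum>l<D. hm (\<sigma> x) (\<sigma> (x+1)) k l * f (\<sigma>(x := k, x+1 := l))) else 0)"

definition Ham :: "nat \<Rightarrow> (nat \<Rightarrow> nat \<Rightarrow> nat \<Rightarrow> nat \<Rightarrow> complex) \<Rightarrow> int \<Rightarrow> int \<Rightarrow> int \<Rightarrow> int \<Rightarrow> vec \<Rightarrow> vec" where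
  "Ham D hm a b c e f = (\<lambda>\<sigma>. \<Sum>x\<in>{c..<e}. bond D hm a b x f \<sigma>)"

definition gs :: "nat \<Rightarrow> (nat \<Rightarrow> nat \<Rightarrow> nat \<Rightarrow> nat \<Rightarrow> complex) \<Rightarrow> int \<Rightarrow> int \<Rightarrow> int \<Rightarrow> int \<Rightarrow> vec set" where
  "gs D hm a b c e = {f \<in> vecs D a b. Ham D hm a b c e f = (\<lambda>_. 0)}"

definition proj :: "nat \<Rightarrow> int \<Rightarrow> int \<Rightarrow> vec set \<Rightarrow> vec \<Rightarrow> vec" where
  "proj D a b S f = (THE g. g \<in> S \<and> (\<forall>u\<in>S. inner_sp D a b u (\<lambda>\<sigma>. f \<sigma> - g \<sigma>) = 0))"

text \<open>G(c,e) as projection on H_[a,b].  For e <= c, H(c,e) = 0 so G(c,e) = 1,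
  matching the conventions G(c,c) = 1 and G(1,k) = 1 for k <= 1.\<close>
definition Gp :: "nat \<Rightarrow> (nat \<Rightarrow> nat \<Rightarrow> nat \<Rightarrow> nat \<Rightarrow> complex) \<Rightarrow> int \<Rightarrow> int \<Rightarrow> int \<Rightarrow> int \<Rightarrow> vec \<Rightarrow> vec" where
  "Gp D hm a b c e = proj D a b (gs D hm a b c e)"

definition frustration_free :: "nat \<Rightarrow> (nat \<Rightarrow> nat \<Rightarrow> nat \<Rightarrow> nat \<Rightarrow> complex) \<Rightarrow> bool" where
  "frustration_free D hm = (\<forall>c e. c \<le> e \<longrightarrow> gs D hm c e c e \<noteq> {\<lambda>_. 0})"

definition gap :: "nat \<Rightarrow> (nat \<Rightarrow> nat \<Rightarrow> nat \<Rightarrow> nat \<Rightarrow> complex) \<Rightarrow> int \<Rightarrow> int \<Rightarrow> real" where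
  "gap D hm c e = Sup {g. \<forall>f\<in>vecs D c e.
      g * Re (inner_sp D c e f (\<lambda>\<sigma>. f \<sigma> - Gp D hm c e c e f \<sigma>))
        \<le> Re (inner_sp D c e f (Ham D hm c e c e f))}"

definition gapN :: "nat \<Rightarrow> (nat \<Rightarrow> nat \<Rightarrow> nat \<Rightarrow> nat \<Rightarrow> complex) \<Rightarrow> int \<Rightarrow> real" where
  "gapN D hm N = Min ((\<lambda>k. gap D hm 1 k) ` {2..N})"

text \<open>epsilon(m,n), computed on H_[-m,n] (sup of the empty set taken as 0).\<close>
definition eps :: "nat \<Rightarrow> (nat \<Rightarrow> nat \<Rightarrow> nat \<Rightarrow> nat \<Rightarrow> complex) \<Rightarrow> int \<Rightarrow> int \<Rightarrow> real" where
  "eps D hm m n = Sup (insert 0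
     {Re (inner_sp D (-m) n \<psi> (Gp D hm (-m) n 0 n \<psi>)) | \<psi>.
        \<psi> \<in> gs D hm (-m) n (-m) 0 \<and>
        (\<forall>u\<in>gs D hm (-m) n (-m) n. inner_sp D (-m) n u \<psi> = 0) \<and>
        norm_sp D (-m) n \<psi> = 1})"

definition eps_mn :: "nat \<Rightarrow> (nat \<Rightarrow> nat \<Rightarrow> nat \<Rightarrow> nat \<Rightarrow> complex) \<Rightarrow> int \<Rightarrow> int \<Rightarrow> real" where
  "eps_mn D hm m n = Sup {eps D hm m' n | m'. m' \<ge> m}"

definition alpha :: "real \<Rightarrow> real" where
  "alpha e = (sqrt (1 - e) - sqrt e)^2"

definition beta :: "real \<Rightarrow> real" where
  "beta e = sqrt (1 - e) * (sqrt (1 - e) - sqrt e)"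

end

theory Submission
  imports Defs "HOL-Library.Function_Algebras" "HOL-Analysis.L2_Norm" "HOL-Library.FuncSet"
begin

definition sc :: "complex \<Rightarrow> vec \<Rightarrow> vec" where "sc c f = (\<lambda>\<sigma>. c * f \<sigma>)"
definition nsq :: "nat \<Rightarrow> int \<Rightarrow> int \<Rightarrow> vec \<Rightarrow> real" where
  "nsq D a b f = Re (inner_sp D a b f f)"

lemma finite_cfgs: "finite (cfgs D a b)"
proof -
  have "cfgs D a b \<subseteq> (\<lambda>g x. if a \<le> x \<and> x \<le> b then g x else 0) ` ({a..b} \<rightarrow>\<^sub>E {..<D})"
  proof
    fix \<sigma> assume s: "\<sigma> \<in> cfgs D a b"
    show "\<sigma> \<in> (\<lambda>g x. if a \<le> x \<and> x \<le> b then g x else 0) ` ({a..b} \<rightarrow>\<^sub>E {..<D})"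
      apply (rule image_eqI[where x="restrict \<sigma> {a..b}"])
      using s by (auto simp: cfgs_def)
  qed
  moreover have "finite ({a..b} \<rightarrow>\<^sub>E {..<D::nat})" by (rule finite_PiE) auto
  ultimately show ?thesis by (meson finite_imageI finite_subset)
qed

lemma inner_add_right: "inner_sp D a b f (g + h) = inner_sp D a b f g + inner_sp D a b f h"
  by (simp add: inner_sp_def sum.distrib distrib_left)
lemma inner_add_left: "inner_sp D a b (f + g) h = inner_sp D a b f h + inner_sp D a b g h"
  by (simp add: inner_sp_def sum.distrib distrib_right)
lemma inner_diff_right: "inner_sp D a b f (g - h) = inner_sp D a b f g - inner_sp D a b f h"
  by (simp add: inner_sp_def sum_subtractf right_diff_distrib)
lemma inner_diff_left: "inner_sp D a b (f - g) h = inner_sp D a b f h - inner_sp D a b g h"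
  by (simp add: inner_sp_def sum_subtractf left_diff_distrib)
lemma inner_sc_right: "inner_sp D a b f (sc c g) = c * inner_sp D a b f g"
  by (simp add: inner_sp_def sc_def sum_distrib_left algebra_simps)
lemma inner_sc_left: "inner_sp D a b (sc c f) g = cnj c * inner_sp D a b f g"
  by (simp add: inner_sp_def sc_def sum_distrib_left algebra_simps)
lemma inner_cnj: "cnj (inner_sp D a b f g) = inner_sp D a b g f"
  by (simp add: inner_sp_def mult.commute)
lemma inner_zero_right[simp]: "inner_sp D a b f 0 = 0"
  by (simp add: inner_sp_def)
lemma inner_zero_left[simp]: "inner_sp D a b 0 f = 0"
  by (simp add: inner_sp_def)

lemma inner_self: "inner_sp D a b f f = of_real (\<Sum>\<sigma>\<in>cfgs D a b. (cmod (f \<sigma>))^2)"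
  unfolding inner_sp_def of_real_sum
  by (rule sum.cong) (simp_all add: complex_norm_square[symmetric] mult.commute)
lemma nsq_eq: "nsq D a b f = (\<Sum>\<sigma>\<in>cfgs D a b. (cmod (f \<sigma>))^2)"
  unfolding nsq_def inner_self by simp
lemma nsq_nonneg: "nsq D a b f \<ge> 0"
  unfolding nsq_eq by (simp add: sum_nonneg)
lemma inner_self_nsq: "inner_sp D a b f f = of_real (nsq D a b f)"
  using inner_self nsq_eq by metis
lemma nsq_zero: "nsq D a b f = 0 \<Longrightarrow> \<sigma> \<in> cfgs D a b \<Longrightarrow> f \<sigma> = 0"
  unfolding nsq_eq using finite_cfgs
  by (metis (no_types, lifting) norm_eq_zero sum_nonneg_eq_0_iff zero_eq_power2 zero_le_power2)
lemma vecs_zero: "f \<in> vecs D a b \<Longrightarrow> (\<And>\<sigma>. \<sigma> \<in> cfgs D a b \<Longrightarrow> f \<sigma> = 0) \<Longrightarrow> f = 0"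
  unfolding vecs_def by (rule ext) auto
lemma inner_zero_on: "(\<And>\<sigma>. \<sigma> \<in> cfgs D a b \<Longrightarrow> f \<sigma> = 0) \<Longrightarrow> inner_sp D a b f g = 0"
  unfolding inner_sp_def by simp
lemma nsq_zero_inner: "nsq D a b f = 0 \<Longrightarrow> inner_sp D a b f g = 0"
  using nsq_zero inner_zero_on by metis

lemma cauchy_schwarz: "cmod (inner_sp D a b f g) \<le> sqrt (nsq D a b f) * sqrt (nsq D a b g)"
proof -
  have "cmod (inner_sp D a b f g) \<le> (\<Sum>\<sigma>\<in>cfgs D a b. cmod (cnj (f \<sigma>) * g \<sigma>))"
    unfolding inner_sp_def by (rule norm_sum)
  also have "\<dots> = (\<Sum>\<sigma>\<in>cfgs D a b. \<bar>cmod (f \<sigma>)\<bar> * \<bar>cmod (g \<sigma>)\<bar>)"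
    by (simp add: norm_mult)
  also have "\<dots> \<le> L2_set (\<lambda>\<sigma>. cmod (f \<sigma>)) (cfgs D a b) * L2_set (\<lambda>\<sigma>. cmod (g \<sigma>)) (cfgs D a b)"
    by (rule L2_set_mult_ineq)
  also have "\<dots> = sqrt (nsq D a b f) * sqrt (nsq D a b g)"
    by (simp add: L2_set_def nsq_eq)
  finally show ?thesis .
qed

lemma cs_sq: "(cmod (inner_sp D a b f g))^2 \<le> nsq D a b f * nsq D a b g"
proof -
  have "(cmod (inner_sp D a b f g))^2 \<le> (sqrt (nsq D a b f) * sqrt (nsq D a b g))^2"
    by (rule power_mono[OF cauchy_schwarz]) simp
  also have "\<dots> = nsq D a b f * nsq D a b g"
    by (simp add: power_mult_distrib nsq_nonneg)
  finally show ?thesis .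
qed


definition subsp :: "nat \<Rightarrow> int \<Rightarrow> int \<Rightarrow> vec set \<Rightarrow> bool" where
  "subsp D a b S \<longleftrightarrow> S \<subseteq> vecs D a b \<and> 0 \<in> S \<and> (\<forall>f\<in>S. \<forall>g\<in>S. f + g \<in> S) \<and> (\<forall>c. \<forall>f\<in>S. sc c f \<in> S)"

lemma subsp_add: "subsp D a b S \<Longrightarrow> f \<in> S \<Longrightarrow> g \<in> S \<Longrightarrow> f + g \<in> S"
  unfolding subsp_def by blast
lemma subsp_sc: "subsp D a b S \<Longrightarrow> f \<in> S \<Longrightarrow> sc c f \<in> S"
  unfolding subsp_def by blast
lemma subsp_zero: "subsp D a b S \<Longrightarrow> 0 \<in> S"
  unfolding subsp_def by blast
lemma subsp_vecs: "subsp D a b S \<Longrightarrow> f \<in> S \<Longrightarrow> f \<in> vecs D a b"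
  unfolding subsp_def by blast
lemma sc_minus_one: "f - g = f + sc (-1) g"
  by (simp add: sc_def fun_eq_iff)
lemma subsp_diff: "subsp D a b S \<Longrightarrow> f \<in> S \<Longrightarrow> g \<in> S \<Longrightarrow> f - g \<in> S"
  unfolding sc_minus_one by (intro subsp_add subsp_sc)

lemma vecs_add: "f \<in> vecs D a b \<Longrightarrow> g \<in> vecs D a b \<Longrightarrow> f + g \<in> vecs D a b"
  by (simp add: vecs_def)
lemma vecs_diff: "f \<in> vecs D a b \<Longrightarrow> g \<in> vecs D a b \<Longrightarrow> f - g \<in> vecs D a b"
  by (simp add: vecs_def)
lemma vecs_sc: "f \<in> vecs D a b \<Longrightarrow> sc c f \<in> vecs D a b"
  by (simp add: vecs_def sc_def)
lemma vecs_zero_in[simp]: "0 \<in> vecs D a b"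
  by (simp add: vecs_def)

lemma nsq_pos: "\<sigma> \<in> cfgs D a b \<Longrightarrow> f \<sigma> \<noteq> 0 \<Longrightarrow> nsq D a b f \<noteq> 0"
  using nsq_zero by blast

lemma proj_exists_aux:
  assumes "finite C"
  shows "C \<subseteq> cfgs D a b \<Longrightarrow> subsp D a b S \<Longrightarrow> (\<forall>h\<in>S. \<forall>\<sigma>. \<sigma> \<notin> C \<longrightarrow> h \<sigma> = 0)
     \<Longrightarrow> \<exists>g\<in>S. \<forall>u\<in>S. inner_sp D a b u (f - g) = 0"
  using assms
proof (induction C arbitrary: S f rule: finite_induct)
  case empty
  then have "\<forall>u\<in>S. u = 0" by (auto simp: fun_eq_iff)
  then have "\<forall>u\<in>S. inner_sp D a b u (f - 0) = 0" by auto
  then show ?case using subsp_zero[OF empty(2)] by blast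
next
  case (insert c C)
  define S' where "S' = {h\<in>S. h c = 0}"
  have sub': "subsp D a b S'"
    using insert.prems(2) unfolding subsp_def S'_def by (auto simp: sc_def)
  have van': "\<forall>h\<in>S'. \<forall>\<sigma>. \<sigma> \<notin> C \<longrightarrow> h \<sigma> = 0"
    using insert.prems(3) unfolding S'_def by auto
  have IH: "\<And>f. \<exists>g\<in>S'. \<forall>u\<in>S'. inner_sp D a b u (f - g) = 0"
    using insert.IH[OF _ sub' van'] insert.prems(1) unfolding fun_diff_def by auto
  show ?case
  proof (cases "\<forall>h\<in>S. h c = 0")
    case True
    then have "S' = S" unfolding S'_def by auto
    then show ?thesis using IH unfolding fun_diff_def by auto
  next
    case False
    then obtain h0 where h0: "h0 \<in> S" "h0 c \<noteq> 0" by auto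
    obtain q where q: "q \<in> S'" "\<forall>u\<in>S'. inner_sp D a b u (h0 - q) = 0" using IH by blast
    define r where "r = h0 - q"
    have rS: "r \<in> S" unfolding r_def using q(1) h0(1) subsp_diff[OF insert.prems(2)] S'_def by auto
    have rc: "r c \<noteq> 0" using q(1) h0(2) unfolding r_def S'_def by auto
    have cin: "c \<in> cfgs D a b" using insert.prems(1) by auto
    have rr: "inner_sp D a b r r \<noteq> 0"
      using nsq_pos[of c D a b r, OF cin rc] by (simp add: inner_self_nsq)
    obtain p where p: "p \<in> S'" "\<forall>u\<in>S'. inner_sp D a b u (f - p) = 0" using IH by blast
    define \<kappa> where "\<kappa> = inner_sp D a b r (f - p) / inner_sp D a b r r"
    define g where "g = p + sc \<kappa> r"
    have pS: "p \<in> S" using p(1) S'_def by auto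
    have gS: "g \<in> S" unfolding g_def
      by (rule subsp_add[OF insert.prems(2) pS subsp_sc[OF insert.prems(2) rS]])
    have "\<forall>u\<in>S. inner_sp D a b u (f - g) = 0"
    proof
      fix u assume uS: "u \<in> S"
      define lam where "lam = u c / r c"
      define u' where "u' = u - sc lam r"
      have u'S0: "u' \<in> S" unfolding u'_def
        by (rule subsp_diff[OF insert.prems(2) uS subsp_sc[OF insert.prems(2) rS]])
      have u'c: "u' c = 0" unfolding u'_def using rc by (simp add: sc_def lam_def)
      have u'S: "u' \<in> S'" unfolding S'_def using u'S0 u'c by blast
      have u_eq: "u = u' + sc lam r" unfolding u'_def by simp
      define X where "X = f - p"
      have fg: "f - g = X - sc \<kappa> r" unfolding g_def X_def by (simp add: diff_diff_eq)
      have A: "inner_sp D a b u' X = 0" using p(2) u'S unfolding X_def by auto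
      have B: "inner_sp D a b u' r = 0" using q(2) u'S unfolding r_def by auto
      have C: "inner_sp D a b r X - \<kappa> * inner_sp D a b r r = 0"
        unfolding \<kappa>_def X_def using rr by simp
      have "inner_sp D a b u (f - g) = inner_sp D a b u' X - \<kappa> * inner_sp D a b u' r
          + cnj lam * (inner_sp D a b r X - \<kappa> * inner_sp D a b r r)"
        unfolding u_eq fg inner_add_left inner_diff_right inner_sc_left inner_sc_right
        by (simp add: algebra_simps)
      then show "inner_sp D a b u (f - g) = 0" using A B C by simp
    qed
    then show ?thesis using gS unfolding fun_diff_def by blast
  qed
qed

lemma proj_exists: "subsp D a b S \<Longrightarrow> \<exists>g\<in>S. \<forall>u\<in>S. inner_sp D a b u (f - g) = 0"
proof -
  assume S: "subsp D a b S"
  have "\<forall>h\<in>S. \<forall>\<sigma>. \<sigma> \<notin> cfgs D a b \<longrightarrow> h \<sigma> = 0"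
    using subsp_vecs[OF S] unfolding vecs_def by blast
  then show ?thesis using proj_exists_aux[OF finite_cfgs subset_refl S] by blast
qed

lemma proj_uniq:
  assumes S: "subsp D a b S" and g1: "g1 \<in> S" "\<forall>u\<in>S. inner_sp D a b u (f - g1) = 0"
    and g2: "g2 \<in> S" "\<forall>u\<in>S. inner_sp D a b u (f - g2) = 0"
  shows "g1 = g2"
proof -
  have dS: "g1 - g2 \<in> S" using subsp_diff[OF S g1(1) g2(1)] .
  have "inner_sp D a b (g1 - g2) (f - g2) - inner_sp D a b (g1 - g2) (f - g1) = 0"
    using g1(2) g2(2) dS by auto
  moreover have "inner_sp D a b (g1 - g2) (f - g2) - inner_sp D a b (g1 - g2) (f - g1)
     = inner_sp D a b (g1 - g2) ((f - g2) - (f - g1))" by (simp only: inner_diff_right)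
  moreover have "(f - g2) - (f - g1) = g1 - g2" by simp
  ultimately have "inner_sp D a b (g1 - g2) (g1 - g2) = 0" by simp
  then have "nsq D a b (g1 - g2) = 0" by (simp add: nsq_def)
  then have "g1 - g2 = 0"
    using vecs_zero[OF subsp_vecs[OF S dS]] nsq_zero by blast
  then show ?thesis by simp
qed

lemma proj_char:
  assumes "subsp D a b S"
  shows "proj D a b S f \<in> S \<and> (\<forall>u\<in>S. inner_sp D a b u (f - proj D a b S f) = 0)"
proof -
  have "\<exists>!g. g \<in> S \<and> (\<forall>u\<in>S. inner_sp D a b u (f - g) = 0)"
    using proj_exists[OF assms] proj_uniq[OF assms] by blast
  then have "\<exists>!g. g \<in> S \<and> (\<forall>u\<in>S. inner_sp D a b u (\<lambda>\<sigma>. f \<sigma> - g \<sigma>) = 0)"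
    by (simp only: fun_diff_def)
  then have "proj D a b S f \<in> S \<and> (\<forall>u\<in>S. inner_sp D a b u (\<lambda>\<sigma>. f \<sigma> - proj D a b S f \<sigma>) = 0)"
    unfolding proj_def by (rule theI')
  then show ?thesis unfolding fun_diff_def by blast
qed

lemma proj_in: "subsp D a b S \<Longrightarrow> proj D a b S f \<in> S"
  using proj_char by blast
lemma proj_orth: "subsp D a b S \<Longrightarrow> u \<in> S \<Longrightarrow> inner_sp D a b u (f - proj D a b S f) = 0"
  using proj_char by blast
lemma proj_eqI:
  assumes S: "subsp D a b S" and g: "g \<in> S" and h: "\<And>u. u \<in> S \<Longrightarrow> inner_sp D a b u (f - g) = 0"
  shows "proj D a b S f = g"
proof -
  have h': "\<forall>u\<in>S. inner_sp D a b u (f - g) = 0" using h by blast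
  have p: "\<forall>u\<in>S. inner_sp D a b u (f - proj D a b S f) = 0" using proj_orth[OF S] by blast
  show ?thesis by (rule proj_uniq[OF S proj_in[OF S] p g h'])
qed
lemma proj_vecs: "subsp D a b S \<Longrightarrow> proj D a b S f \<in> vecs D a b"
  using proj_in subsp_vecs by blast

lemma proj_id: "subsp D a b S \<Longrightarrow> f \<in> S \<Longrightarrow> proj D a b S f = f"
  by (rule proj_eqI) simp_all

lemma proj_add:
  assumes S: "subsp D a b S"
  shows "proj D a b S (f + g) = proj D a b S f + proj D a b S g"
proof (rule proj_eqI[OF S])
  show "proj D a b S f + proj D a b S g \<in> S" by (rule subsp_add[OF S proj_in[OF S] proj_in[OF S]])
  fix u assume u: "u \<in> S"
  have eq: "f + g - (proj D a b S f + proj D a b S g) = (f - proj D a b S f) + (g - proj D a b S g)"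
    by (simp add: algebra_simps)
  show "inner_sp D a b u (f + g - (proj D a b S f + proj D a b S g)) = 0"
    unfolding eq inner_add_right using proj_orth[OF S u, of f] proj_orth[OF S u, of g] by simp
qed

lemma proj_sc:
  assumes S: "subsp D a b S"
  shows "proj D a b S (sc c f) = sc c (proj D a b S f)"
proof (rule proj_eqI[OF S])
  show "sc c (proj D a b S f) \<in> S" by (rule subsp_sc[OF S proj_in[OF S]])
  fix u assume u: "u \<in> S"
  have eq: "sc c f - sc c (proj D a b S f) = sc c (f - proj D a b S f)"
    by (simp add: sc_def fun_eq_iff algebra_simps)
  show "inner_sp D a b u (sc c f - sc c (proj D a b S f)) = 0"
    unfolding eq inner_sc_right using proj_orth[OF S u, of f] by simp
qed

lemma proj_diff:
  assumes S: "subsp D a b S"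
  shows "proj D a b S (f - g) = proj D a b S f - proj D a b S g"
proof (rule proj_eqI[OF S])
  show "proj D a b S f - proj D a b S g \<in> S" by (rule subsp_diff[OF S proj_in[OF S] proj_in[OF S]])
  fix u assume u: "u \<in> S"
  have eq: "f - g - (proj D a b S f - proj D a b S g) = (f - proj D a b S f) - (g - proj D a b S g)"
    by (simp add: algebra_simps)
  show "inner_sp D a b u (f - g - (proj D a b S f - proj D a b S g)) = 0"
    unfolding eq using proj_orth[OF S u, of f] proj_orth[OF S u, of g] by (simp add: inner_diff_right)
qed

lemma proj_zero: "subsp D a b S \<Longrightarrow> proj D a b S 0 = 0"
  using proj_id subsp_zero by blast

lemma proj_orth_zero:
  assumes S: "subsp D a b S"
  shows "(\<forall>u\<in>S. inner_sp D a b u f = 0) \<longleftrightarrow> proj D a b S f = 0"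
proof
  assume h: "\<forall>u\<in>S. inner_sp D a b u f = 0"
  show "proj D a b S f = 0"
    by (rule proj_eqI[OF S subsp_zero[OF S]]) (use h in simp)
next
  assume h: "proj D a b S f = 0"
  show "\<forall>u\<in>S. inner_sp D a b u f = 0"
    using proj_orth[OF S, of _ f] h by simp
qed

lemma proj_self_adj:
  assumes S: "subsp D a b S"
  shows "inner_sp D a b (proj D a b S f) g = inner_sp D a b f (proj D a b S g)"
proof -
  let ?P = "proj D a b S"
  have 1: "inner_sp D a b (?P f) (g - ?P g) = 0" using proj_orth[OF S proj_in[OF S]] by blast
  have 2: "inner_sp D a b (?P g) (f - ?P f) = 0" using proj_orth[OF S proj_in[OF S]] by blast
  then have h2: "inner_sp D a b (f - ?P f) (?P g) = 0" using inner_cnj by (metis complex_cnj_zero)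
  show ?thesis using 1 h2 by (simp add: inner_diff_right inner_diff_left)
qed

lemma proj_pyth:
  assumes S: "subsp D a b S"
  shows "nsq D a b f = nsq D a b (proj D a b S f) + nsq D a b (f - proj D a b S f)"
proof -
  let ?P = "proj D a b S"
  have 1: "inner_sp D a b (?P f) (f - ?P f) = 0" using proj_orth[OF S proj_in[OF S]] by blast
  then have 2: "inner_sp D a b (f - ?P f) (?P f) = 0" using inner_cnj by (metis complex_cnj_zero)
  have "inner_sp D a b f f = inner_sp D a b (?P f + (f - ?P f)) (?P f + (f - ?P f))" by simp
  also have "\<dots> = inner_sp D a b (?P f) (?P f) + inner_sp D a b (f - ?P f) (f - ?P f)"
    unfolding inner_add_left inner_add_right using 1 2 by simp
  finally show ?thesis unfolding nsq_def by simp
qed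

lemma proj_quad:
  assumes S: "subsp D a b S"
  shows "inner_sp D a b f (proj D a b S f) = of_real (nsq D a b (proj D a b S f))"
proof -
  let ?P = "proj D a b S"
  have 1: "inner_sp D a b (?P f) (f - ?P f) = 0" using proj_orth[OF S proj_in[OF S]] by blast
  then have 2: "inner_sp D a b (f - ?P f) (?P f) = 0" using inner_cnj by (metis complex_cnj_zero)
  have "inner_sp D a b f (?P f) = inner_sp D a b (?P f + (f - ?P f)) (?P f)" by simp
  also have "\<dots> = inner_sp D a b (?P f) (?P f)" unfolding inner_add_left using 2 by simp
  finally show ?thesis by (simp add: inner_self_nsq)
qed

lemma proj_nested1: "subsp D a b S1 \<Longrightarrow> subsp D a b S2 \<Longrightarrow> S1 \<subseteq> S2 \<Longrightarrow>
   proj D a b S2 (proj D a b S1 f) = proj D a b S1 f"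
  using proj_id proj_in by blast

lemma proj_nested2:
  assumes S1: "subsp D a b S1" and S2: "subsp D a b S2" and sub: "S1 \<subseteq> S2"
  shows "proj D a b S1 (proj D a b S2 f) = proj D a b S1 f"
proof (rule proj_eqI[OF S1 proj_in[OF S1]])
  fix u assume u: "u \<in> S1"
  have eq: "proj D a b S2 f - proj D a b S1 f = (f - proj D a b S1 f) - (f - proj D a b S2 f)"
    by (simp add: algebra_simps)
  have "u \<in> S2" using u sub by blast
  then show "inner_sp D a b u (proj D a b S2 f - proj D a b S1 f) = 0"
    unfolding eq using proj_orth[OF S1 u, of f] proj_orth[OF S2, of u f] by (simp add: inner_diff_right)
qed

lemma proj_nsq_le: "subsp D a b S \<Longrightarrow> nsq D a b (proj D a b S f) \<le> nsq D a b f"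
  using proj_pyth[of D a b S f] nsq_nonneg[of D a b "f - proj D a b S f"] by linarith


definition mrg :: "int \<Rightarrow> int \<Rightarrow> cfg \<Rightarrow> cfg \<Rightarrow> cfg" where
  "mrg c e \<sigma> \<rho> = (\<lambda>x. if c \<le> x \<and> x \<le> e then \<sigma> x else \<rho> x)"
definition rin :: "int \<Rightarrow> int \<Rightarrow> cfg \<Rightarrow> cfg" where
  "rin c e \<tau> = (\<lambda>x. if c \<le> x \<and> x \<le> e then \<tau> x else 0)"
definition zout :: "int \<Rightarrow> int \<Rightarrow> cfg \<Rightarrow> cfg" where
  "zout c e \<tau> = (\<lambda>x. if c \<le> x \<and> x \<le> e then 0 else \<tau> x)"
definition outer :: "nat \<Rightarrow> int \<Rightarrow> int \<Rightarrow> int \<Rightarrow> int \<Rightarrow> cfg set" where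
  "outer D a b c e = {\<rho> \<in> cfgs D a b. \<forall>x. c \<le> x \<and> x \<le> e \<longrightarrow> \<rho> x = 0}"
definition slc :: "nat \<Rightarrow> int \<Rightarrow> int \<Rightarrow> vec \<Rightarrow> cfg \<Rightarrow> vec" where
  "slc D c e f \<rho> = (\<lambda>\<sigma>. if \<sigma> \<in> cfgs D c e then f (mrg c e \<sigma> \<rho>) else 0)"

lemma zout_mrg: "\<rho> \<in> outer D a b c e \<Longrightarrow> zout c e (mrg c e \<sigma> \<rho>) = \<rho>"
  by (auto simp: zout_def mrg_def outer_def fun_eq_iff)
lemma rin_mrg: "\<sigma> \<in> cfgs D c e \<Longrightarrow> rin c e (mrg c e \<sigma> \<rho>) = \<sigma>"
  by (auto simp: rin_def mrg_def cfgs_def fun_eq_iff)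
lemma mrg_rin_zout: "mrg c e (rin c e \<tau>) (zout c e \<tau>) = \<tau>"
  by (auto simp: rin_def mrg_def zout_def fun_eq_iff)
lemma mrg_in: "a \<le> c \<Longrightarrow> e \<le> b \<Longrightarrow> \<sigma> \<in> cfgs D c e \<Longrightarrow> \<rho> \<in> outer D a b c e \<Longrightarrow> mrg c e \<sigma> \<rho> \<in> cfgs D a b"
  by (auto simp: mrg_def outer_def cfgs_def)
lemma zout_in: "\<tau> \<in> cfgs D a b \<Longrightarrow> zout c e \<tau> \<in> outer D a b c e"
  by (auto simp: zout_def outer_def cfgs_def)
lemma rin_in: "a \<le> c \<Longrightarrow> e \<le> b \<Longrightarrow> \<tau> \<in> cfgs D a b \<Longrightarrow> rin c e \<tau> \<in> cfgs D c e"
  by (auto simp: rin_def cfgs_def)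

lemma finite_outer: "finite (outer D a b c e)"
  using finite_cfgs[of D a b] unfolding outer_def by auto

lemma bij_mrg: "a \<le> c \<Longrightarrow> e \<le> b \<Longrightarrow>
  bij_betw (\<lambda>(\<rho>, \<sigma>). mrg c e \<sigma> \<rho>) (outer D a b c e \<times> cfgs D c e) (cfgs D a b)"
  apply (rule bij_betw_byWitness[where f'="\<lambda>\<tau>. (zout c e \<tau>, rin c e \<tau>)"])
  using zout_mrg rin_mrg mrg_rin_zout mrg_in zout_in rin_in by fastforce+

lemma sum_slice:
  assumes "a \<le> c" "e \<le> b"
  shows "(\<Sum>\<tau>\<in>cfgs D a b. F \<tau>) = (\<Sum>\<rho>\<in>outer D a b c e. \<Sum>\<sigma>\<in>cfgs D c e. F (mrg c e \<sigma> \<rho>))"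
proof -
  have "(\<Sum>\<rho>\<in>outer D a b c e. \<Sum>\<sigma>\<in>cfgs D c e. F (mrg c e \<sigma> \<rho>))
      = (\<Sum>x\<in>outer D a b c e \<times> cfgs D c e. F ((\<lambda>(\<rho>, \<sigma>). mrg c e \<sigma> \<rho>) x))"
    by (subst sum.cartesian_product) (auto intro!: sum.cong split: prod.splits)
  also have "\<dots> = (\<Sum>\<tau>\<in>cfgs D a b. F \<tau>)"
    by (rule sum.reindex_bij_betw[OF bij_mrg[OF assms]])
  finally show ?thesis by simp
qed

lemma inner_slice:
  assumes "a \<le> c" "e \<le> b"
  shows "inner_sp D a b f g = (\<Sum>\<rho>\<in>outer D a b c e. inner_sp D c e (slc D c e f \<rho>) (slc D c e g \<rho>))"
  unfolding inner_sp_def sum_slice[OF assms, where D=D and F="\<lambda>\<tau>. cnj (f \<tau>) * g \<tau>"]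
  by (intro sum.cong refl) (simp add: slc_def)

lemma nsq_slice:
  assumes "a \<le> c" "e \<le> b"
  shows "nsq D a b f = (\<Sum>\<rho>\<in>outer D a b c e. nsq D c e (slc D c e f \<rho>))"
  unfolding nsq_def inner_slice[OF assms, of D f f] by simp

lemma slc_vecs: "slc D c e f \<rho> \<in> vecs D c e"
  by (simp add: slc_def vecs_def)
lemma slc_add: "slc D c e (f + g) \<rho> = slc D c e f \<rho> + slc D c e g \<rho>"
  by (simp add: slc_def fun_eq_iff)
lemma slc_diff: "slc D c e (f - g) \<rho> = slc D c e f \<rho> - slc D c e g \<rho>"
  by (simp add: slc_def fun_eq_iff)
lemma slc_sc: "slc D c e (sc k f) \<rho> = sc k (slc D c e f \<rho>)"
  by (simp add: slc_def sc_def fun_eq_iff)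
lemma slc_zero: "slc D c e 0 \<rho> = 0"
  by (simp add: slc_def fun_eq_iff)

definition trv :: "int \<Rightarrow> vec \<Rightarrow> vec" where
  "trv t f = (\<lambda>\<tau>. f (\<lambda>x. \<tau> (x + t)))"

lemma cfgs_shift: "((\<lambda>x. \<tau> (x + t)) \<in> cfgs D a b) = (\<tau> \<in> cfgs D (a + t) (b + t))"
proof
  assume h: "(\<lambda>x. \<tau> (x + t)) \<in> cfgs D a b"
  show "\<tau> \<in> cfgs D (a + t) (b + t)"
    unfolding cfgs_def
  proof (intro CollectI conjI allI impI)
    fix x assume "a + t \<le> x \<and> x \<le> b + t"
    then show "\<tau> x < D" using h unfolding cfgs_def by (auto dest: spec[of _ "x - t"])
  next
    fix x assume "\<not> (a + t \<le> x \<and> x \<le> b + t)"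
    then show "\<tau> x = 0" using h unfolding cfgs_def by (auto dest: spec[of _ "x - t"])
  qed
next
  assume h: "\<tau> \<in> cfgs D (a + t) (b + t)"
  then show "(\<lambda>x. \<tau> (x + t)) \<in> cfgs D a b"
    unfolding cfgs_def by auto
qed

lemma trv_vecs: "f \<in> vecs D a b \<Longrightarrow> trv t f \<in> vecs D (a + t) (b + t)"
  unfolding vecs_def trv_def using cfgs_shift by blast

lemma bij_shift: "bij_betw (\<lambda>\<tau>. (\<lambda>x. \<tau> (x + t))) (cfgs D (a + t) (b + t)) (cfgs D a b)"
  apply (rule bij_betw_byWitness[where f'="\<lambda>\<sigma>. (\<lambda>x. \<sigma> (x - t))"])
  using cfgs_shift[of _ t D a b] cfgs_shift[of _ "-t" D "a+t" "b+t"] by auto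

lemma sum_shift: "(\<Sum>\<tau>\<in>cfgs D (a + t) (b + t). F (\<lambda>x. \<tau> (x + t))) = (\<Sum>\<sigma>\<in>cfgs D a b. F \<sigma>)"
  by (rule sum.reindex_bij_betw[OF bij_shift])

lemma inner_trv: "inner_sp D (a + t) (b + t) (trv t f) (trv t g) = inner_sp D a b f g"
  unfolding inner_sp_def trv_def by (rule sum_shift)

lemma nsq_trv: "nsq D (a + t) (b + t) (trv t f) = nsq D a b f"
  unfolding nsq_def inner_trv ..

lemma trv_trv: "trv t (trv (-t) f) = f"
  by (simp add: trv_def)
lemma trv_add: "trv t (f + g) = trv t f + trv t g"
  by (simp add: trv_def fun_eq_iff)
lemma trv_diff: "trv t (f - g) = trv t f - trv t g"
  by (simp add: trv_def fun_eq_iff)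
lemma trv_sc: "trv t (sc k f) = sc k (trv t f)"
  by (simp add: trv_def sc_def fun_eq_iff)
lemma trv_zero: "trv t 0 = 0"
  by (simp add: trv_def fun_eq_iff)


lemma bond_vecs: "bond D hm a b x f \<in> vecs D a b"
  by (simp add: bond_def vecs_def)
lemma Ham_vecs: "Ham D hm a b c e f \<in> vecs D a b"
  by (simp add: Ham_def bond_def vecs_def)

lemma bond_add: "bond D hm a b x (f + g) = bond D hm a b x f + bond D hm a b x g"
  by (simp add: bond_def fun_eq_iff sum.distrib distrib_left)
lemma bond_diff: "bond D hm a b x (f - g) = bond D hm a b x f - bond D hm a b x g"
  by (simp add: bond_def fun_eq_iff sum_subtractf right_diff_distrib)
lemma bond_sc: "bond D hm a b x (sc k f) = sc k (bond D hm a b x f)"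
  by (simp add: bond_def fun_eq_iff sc_def sum_distrib_left algebra_simps)

lemma Ham_add: "Ham D hm a b c e (f + g) = Ham D hm a b c e f + Ham D hm a b c e g"
  by (simp add: Ham_def bond_add fun_eq_iff sum.distrib)
lemma Ham_diff: "Ham D hm a b c e (f - g) = Ham D hm a b c e f - Ham D hm a b c e g"
  by (simp add: Ham_def bond_diff fun_eq_iff sum_subtractf)
lemma Ham_sc: "Ham D hm a b c e (sc k f) = sc k (Ham D hm a b c e f)"
  unfolding Ham_def bond_sc by (simp add: fun_eq_iff sc_def sum_distrib_left)
lemma Ham_zero: "Ham D hm a b c e 0 = 0"
proof -
  have z: "sc 0 (0::vec) = 0" by (simp add: sc_def fun_eq_iff)
  have "Ham D hm a b c e (sc 0 0) = sc 0 (Ham D hm a b c e 0)" by (rule Ham_sc)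
  also have "\<dots> = 0" by (simp add: sc_def fun_eq_iff)
  finally show ?thesis unfolding z .
qed

lemma Ham_empty: "e \<le> c \<Longrightarrow> Ham D hm a b c e f = 0"
  by (simp add: Ham_def fun_eq_iff)

lemma Ham_split: "c \<le> k \<Longrightarrow> k \<le> e \<Longrightarrow> Ham D hm a b c e f = Ham D hm a b c k f + Ham D hm a b k e f"
proof -
  assume h: "c \<le> k" "k \<le> e"
  have "{c..<e} = {c..<k} \<union> {k..<e}" using ivl_disj_un_two(3)[OF h] by simp
  then show ?thesis unfolding Ham_def
    by (simp add: fun_eq_iff sum.union_disjoint[symmetric] ivl_disj_int_two)
qed

lemma Ham_single: "Ham D hm a b x (x + 1) f = bond D hm a b x f"
proof -
  have "{x..<x+1} = {x}" by auto
  then show ?thesis by (simp add: Ham_def fun_eq_iff)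
qed

lemma inner_Ham: "inner_sp D a b f (Ham D hm a b c e g) = (\<Sum>x\<in>{c..<e}. inner_sp D a b f (bond D hm a b x g))"
  unfolding inner_sp_def Ham_def by (simp add: sum_distrib_left sum.swap[of _ "cfgs D a b"])

lemma upd_in_cfgs: "\<sigma> \<in> cfgs D a b \<Longrightarrow> a \<le> x \<Longrightarrow> x + 1 \<le> b \<Longrightarrow> k < D \<Longrightarrow> l < D \<Longrightarrow>
   \<sigma>(x := k, x + 1 := l) \<in> cfgs D a b"
  by (auto simp: cfgs_def)

lemma mrg_upd: "c \<le> x \<Longrightarrow> x + 1 \<le> e \<Longrightarrow> mrg c e (\<sigma>(x := k, x + 1 := l)) \<rho> = (mrg c e \<sigma> \<rho>)(x := k, x + 1 := l)"
  by (auto simp: mrg_def fun_eq_iff)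

lemma bond_slice:
  assumes ac: "a \<le> c" and eb: "e \<le> b" and x: "c \<le> x" "x + 1 \<le> e" and \<rho>: "\<rho> \<in> outer D a b c e"
  shows "slc D c e (bond D hm a b x f) \<rho> = bond D hm c e x (slc D c e f \<rho>)"
proof
  fix \<sigma>
  show "slc D c e (bond D hm a b x f) \<rho> \<sigma> = bond D hm c e x (slc D c e f \<rho>) \<sigma>"
  proof (cases "\<sigma> \<in> cfgs D c e")
    case True
    have m: "mrg c e \<sigma> \<rho> \<in> cfgs D a b" by (rule mrg_in[OF ac eb True \<rho>])
    have mx: "mrg c e \<sigma> \<rho> x = \<sigma> x" "mrg c e \<sigma> \<rho> (x + 1) = \<sigma> (x + 1)"
      using x by (auto simp: mrg_def)
    show ?thesis using True m
      by (auto simp: slc_def bond_def mx upd_in_cfgs[OF True] x mrg_upd intro!: sum.cong)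
  next
    case False
    then show ?thesis by (simp add: slc_def bond_def)
  qed
qed

lemma Ham_slice:
  assumes ac: "a \<le> c" and eb: "e \<le> b" and x: "c \<le> c0" "e0 \<le> e" and \<rho>: "\<rho> \<in> outer D a b c e"
  shows "slc D c e (Ham D hm a b c0 e0 f) \<rho> = Ham D hm c e c0 e0 (slc D c e f \<rho>)"
proof
  fix \<sigma>
  have "slc D c e (Ham D hm a b c0 e0 f) \<rho> \<sigma> = (\<Sum>x\<in>{c0..<e0}. slc D c e (bond D hm a b x f) \<rho> \<sigma>)"
    by (simp add: slc_def Ham_def)
  also have "\<dots> = (\<Sum>x\<in>{c0..<e0}. bond D hm c e x (slc D c e f \<rho>) \<sigma>)"
    using bond_slice[OF ac eb _ _ \<rho>] x by (intro sum.cong refl) auto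
  finally show "slc D c e (Ham D hm a b c0 e0 f) \<rho> \<sigma> = Ham D hm c e c0 e0 (slc D c e f \<rho>) \<sigma>"
    by (simp add: Ham_def)
qed

lemma bond_trv: "bond D hm (a + t) (b + t) (x + t) (trv t f) = trv t (bond D hm a b x f)"
proof
  fix \<tau> :: cfg
  have e: "\<And>k l. (\<lambda>y. (\<tau>(x + t := k, x + t + 1 := l)) (y + t)) = (\<lambda>y. \<tau> (y + t))(x := k, x + 1 := l)"
    by (auto simp: fun_eq_iff)
  show "bond D hm (a + t) (b + t) (x + t) (trv t f) \<tau> = trv t (bond D hm a b x f) \<tau>"
    unfolding bond_def trv_def cfgs_shift[symmetric] e
    by (simp add: add.commute add.left_commute)
qed

lemma Ham_trv: "Ham D hm (a + t) (b + t) (c + t) (e + t) (trv t f) = trv t (Ham D hm a b c e f)"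
proof
  fix \<tau> :: cfg
  have img: "{c + t..<e + t} = (\<lambda>x. x + t) ` {c..<e}"
    by (auto simp: image_iff intro!: bexI[of _ "_ - t"])
  have "Ham D hm (a + t) (b + t) (c + t) (e + t) (trv t f) \<tau>
      = (\<Sum>x\<in>{c..<e}. bond D hm (a + t) (b + t) (x + t) (trv t f) \<tau>)"
    unfolding Ham_def img by (subst sum.reindex) (auto simp: inj_on_def)
  also have "\<dots> = (\<Sum>x\<in>{c..<e}. trv t (bond D hm a b x f) \<tau>)"
    by (simp add: bond_trv)
  finally show "Ham D hm (a + t) (b + t) (c + t) (e + t) (trv t f) \<tau> = trv t (Ham D hm a b c e f) \<tau>"
    by (simp add: Ham_def trv_def)
qed


definition e2 :: "int \<Rightarrow> nat \<Rightarrow> nat \<Rightarrow> cfg" where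
  "e2 x i j = (\<lambda>y. if y = x then i else if y = x + 1 then j else 0)"

lemma bij_e2: "bij_betw (\<lambda>(i, j). e2 x i j) ({..<D} \<times> {..<D}) (cfgs D x (x + 1))"
  apply (rule bij_betw_byWitness[where f'="\<lambda>\<sigma>. (\<sigma> x, \<sigma> (x + 1))"])
     apply (auto simp: e2_def cfgs_def fun_eq_iff)
  done

lemma sum_e2: "(\<Sum>\<sigma>\<in>cfgs D x (x + 1). F \<sigma>) = (\<Sum>i<D. \<Sum>j<D. F (e2 x i j))"
proof -
  have "(\<Sum>\<sigma>\<in>cfgs D x (x + 1). F \<sigma>) = (\<Sum>p\<in>{..<D} \<times> {..<D}. F ((\<lambda>(i, j). e2 x i j) p))"
    by (rule sum.reindex_bij_betw[OF bij_e2, symmetric])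
  also have "\<dots> = (\<Sum>i<D. \<Sum>j<D. F (e2 x i j))"
    unfolding sum.cartesian_product by (simp add: split_def)
  finally show ?thesis .
qed

lemma e2_in: "i < D \<Longrightarrow> j < D \<Longrightarrow> e2 x i j \<in> cfgs D x (x + 1)"
  by (auto simp: e2_def cfgs_def)
lemma e2_upd: "(e2 x i j)(x := k, x + 1 := l) = e2 x k l"
  by (auto simp: e2_def fun_eq_iff)
lemma e2_x: "e2 x i j x = i" "e2 x i j (x + 1) = j"
  by (auto simp: e2_def)

lemma bond_small_quad:
  "inner_sp D x (x + 1) g (bond D hm x (x + 1) x g)
   = (\<Sum>i<D. \<Sum>j<D. \<Sum>k<D. \<Sum>l<D. cnj (g (e2 x i j)) * hm i j k l * g (e2 x k l))"
  unfolding inner_sp_def sum_e2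
  by (intro sum.cong refl) (simp add: bond_def e2_in e2_upd e2_x sum_distrib_left mult.assoc)

lemma bond_small_psd:
  assumes "positive_int D hm"
  shows "Im (inner_sp D x (x + 1) g (bond D hm x (x + 1) x g)) = 0 \<and>
         Re (inner_sp D x (x + 1) g (bond D hm x (x + 1) x g)) \<ge> 0"
  using assms unfolding positive_int_def bond_small_quad Let_def
  by (erule_tac x="\<lambda>i j. g (e2 x i j)" in allE) simp

lemma bond_psd:
  assumes pos: "positive_int D hm" and ax: "a \<le> x" and xb: "x + 1 \<le> b"
  shows "Im (inner_sp D a b f (bond D hm a b x f)) = 0 \<and> Re (inner_sp D a b f (bond D hm a b x f)) \<ge> 0"
proof -
  have eq: "inner_sp D a b f (bond D hm a b x f)
      = (\<Sum>\<rho>\<in>outer D a b x (x + 1). inner_sp D x (x + 1) (slc D x (x + 1) f \<rho>) (bond D hm x (x + 1) x (slc D x (x + 1) f \<rho>)))"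
    unfolding inner_slice[OF ax xb, of D f]
    by (intro sum.cong refl) (simp add: bond_slice[OF ax xb order_refl order_refl])
  show ?thesis unfolding eq Im_sum Re_sum
    using bond_small_psd[OF pos] by (simp add: sum_nonneg)
qed

lemma Ham_psd:
  assumes pos: "positive_int D hm" and ac: "a \<le> c" and eb: "e \<le> b"
  shows "Im (inner_sp D a b f (Ham D hm a b c e f)) = 0 \<and> Re (inner_sp D a b f (Ham D hm a b c e f)) \<ge> 0"
proof -
  have "\<And>x. x \<in> {c..<e} \<Longrightarrow> Im (inner_sp D a b f (bond D hm a b x f)) = 0 \<and> Re (inner_sp D a b f (bond D hm a b x f)) \<ge> 0"
    using bond_psd[OF pos] ac eb by auto
  then show ?thesis unfolding inner_Ham Im_sum Re_sum by (auto intro!: sum_nonneg sum.neutral)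
qed

lemma herm_from_real:
  fixes T :: "vec \<Rightarrow> vec"
  assumes add: "\<And>f g. T (f + g) = T f + T g" and scl: "\<And>k f. T (sc k f) = sc k (T f)"
    and real: "\<And>f. f \<in> vecs D a b \<Longrightarrow> Im (inner_sp D a b f (T f)) = 0"
    and f: "f \<in> vecs D a b" and g: "g \<in> vecs D a b"
  shows "inner_sp D a b f (T g) = cnj (inner_sp D a b g (T f))"
proof -
  let ?q = "\<lambda>u v. inner_sp D a b u (T v)"
  have 1: "?q (f + g) (f + g) = ?q f f + ?q f g + ?q g f + ?q g g"
    by (simp add: add inner_add_left inner_add_right)
  have "?q (f + sc \<i> g) (f + sc \<i> g) = inner_sp D a b (f + sc \<i> g) (T f + sc \<i> (T g))"
    by (simp only: add scl)
  also have "\<dots> = ?q f f + cnj \<i> * ?q g f + \<i> * (?q f g + cnj \<i> * ?q g g)"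
    by (simp only: inner_add_left inner_add_right inner_sc_left inner_sc_right)
  finally have 2: "?q (f + sc \<i> g) (f + sc \<i> g) = ?q f f + cnj \<i> * ?q g f + \<i> * (?q f g + cnj \<i> * ?q g g)" .
  have fg: "f + g \<in> vecs D a b" "f + sc \<i> g \<in> vecs D a b"
    using f g by (auto intro: vecs_add vecs_sc)
  have i1: "Im (?q f g) + Im (?q g f) = 0"
    using real[OF fg(1)] real[OF f] real[OF g] unfolding 1 by simp
  have i2: "Re (?q f g) - Re (?q g f) = 0"
    using real[OF fg(2)] real[OF f] real[OF g] unfolding 2 by simp
  show ?thesis using i1 i2 by (intro complex_eqI) auto
qed

lemma psd_kernel:
  fixes T :: "vec \<Rightarrow> vec"
  assumes add: "\<And>f g. T (f + g) = T f + T g" and scl: "\<And>k f. T (sc k f) = sc k (T f)"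
    and real: "\<And>f. f \<in> vecs D a b \<Longrightarrow> Im (inner_sp D a b f (T f)) = 0"
    and pos: "\<And>f. f \<in> vecs D a b \<Longrightarrow> Re (inner_sp D a b f (T f)) \<ge> 0"
    and tv: "\<And>f. T f \<in> vecs D a b"
    and f: "f \<in> vecs D a b" and z: "inner_sp D a b f (T f) = 0"
  shows "T f = 0"
proof (rule ccontr)
  assume ne: "T f \<noteq> 0"
  let ?g = "T f"
  let ?q = "\<lambda>u v. inner_sp D a b u (T v)"
  define N where "N = nsq D a b ?g"
  define M where "M = Re (?q ?g ?g)"
  have N0: "N > 0"
  proof -
    have "N \<noteq> 0" using ne vecs_zero[OF tv] nsq_zero unfolding N_def by blast
    then show ?thesis using nsq_nonneg[of D a b ?g] unfolding N_def by linarith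
  qed
  have M0: "M \<ge> 0" unfolding M_def by (rule pos[OF tv])
  define t where "t = N / (M + 1)"
  have t0: "t > 0" unfolding t_def using N0 M0 by simp
  have tM: "t * M < N"
  proof -
    have "t * M = N * (M / (M + 1))" unfolding t_def by simp
    also have "\<dots> < N * 1" using N0 M0 by (intro mult_strict_left_mono) auto
    finally show ?thesis by simp
  qed
  have qgf: "?q ?g f = of_real N" unfolding N_def by (simp add: inner_self_nsq)
  have qfg: "?q f ?g = of_real N"
    using herm_from_real[OF add scl real f tv] qgf by simp
  define h where "h = f + sc (- of_real t) ?g"
  have hv: "h \<in> vecs D a b" unfolding h_def using f tv by (intro vecs_add vecs_sc)
  have Th: "T h = T f + sc (- of_real t) (T ?g)"
    unfolding h_def by (simp only: add scl)
  have "?q h h = inner_sp D a b (f + sc (- of_real t) ?g) (T f + sc (- of_real t) (T ?g))"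
    unfolding Th unfolding h_def ..
  also have "\<dots> = ?q f f + cnj (- of_real t) * ?q ?g f + (- of_real t) * (?q f ?g + cnj (- of_real t) * ?q ?g ?g)"
    by (simp only: inner_add_left inner_add_right inner_sc_left inner_sc_right)
  finally have eqc: "?q h h = ?q f f + cnj (- of_real t) * ?q ?g f + (- of_real t) * (?q f ?g + cnj (- of_real t) * ?q ?g ?g)" .
  have "Re (?q h h) = - 2 * t * N + t * t * M"
    unfolding eqc z qgf qfg M_def by (simp add: algebra_simps)
  also have "\<dots> = t * (t * M - 2 * N)" by (simp add: algebra_simps)
  also have "\<dots> < 0" using t0 tM N0 by (intro mult_pos_neg) auto
  finally show False using pos[OF hv] by simp
qed

lemma Ham_herm:
  assumes pos: "positive_int D hm" and ac: "a \<le> c" and eb: "e \<le> b"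
    and f: "f \<in> vecs D a b" and g: "g \<in> vecs D a b"
  shows "inner_sp D a b f (Ham D hm a b c e g) = inner_sp D a b (Ham D hm a b c e f) g"
proof -
  have "inner_sp D a b f (Ham D hm a b c e g) = cnj (inner_sp D a b g (Ham D hm a b c e f))"
    by (rule herm_from_real[OF Ham_add Ham_sc _ f g]) (use Ham_psd[OF pos ac eb] in blast)
  then show ?thesis by (simp add: inner_cnj)
qed

lemma Ham_kernel:
  assumes pos: "positive_int D hm" and ac: "a \<le> c" and eb: "e \<le> b"
    and f: "f \<in> vecs D a b" and z: "inner_sp D a b f (Ham D hm a b c e f) = 0"
  shows "Ham D hm a b c e f = 0"
  by (rule psd_kernel[OF Ham_add Ham_sc _ _ Ham_vecs f z]) (use Ham_psd[OF pos ac eb] in blast)+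

lemma sc_zero: "sc k 0 = 0"
  by (simp add: sc_def fun_eq_iff)

lemma gs_iff: "f \<in> gs D hm a b c e \<longleftrightarrow> f \<in> vecs D a b \<and> Ham D hm a b c e f = 0"
  by (simp add: gs_def zero_fun_def)

lemma gs_subsp: "subsp D a b (gs D hm a b c e)"
  unfolding subsp_def
  by (auto simp: gs_iff vecs_add vecs_sc Ham_add Ham_sc Ham_zero sc_zero)

lemma gs_mono:
  assumes pos: "positive_int D hm" and ac: "a \<le> c" and eb: "e \<le> b" and cc: "c \<le> c'" and ee: "e' \<le> e"
  shows "gs D hm a b c e \<subseteq> gs D hm a b c' e'"
proof
  fix f assume f: "f \<in> gs D hm a b c e"
  then have fv: "f \<in> vecs D a b" and H0: "Ham D hm a b c e f = 0" unfolding gs_iff by auto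
  show "f \<in> gs D hm a b c' e'"
  proof (cases "c' < e'")
    case False
    then show ?thesis using fv Ham_empty[of e' c'] unfolding gs_iff by auto
  next
    case True
    have sp: "Ham D hm a b c e f = Ham D hm a b c c' f + Ham D hm a b c' e' f + Ham D hm a b e' e f"
      using Ham_split[of c c' e] Ham_split[of c' e' e] cc ee True by simp
    let ?A = "inner_sp D a b f (Ham D hm a b c c' f)"
    let ?B = "inner_sp D a b f (Ham D hm a b c' e' f)"
    let ?C = "inner_sp D a b f (Ham D hm a b e' e f)"
    have "?A + ?B + ?C = 0" using H0 sp by (simp add: inner_add_right[symmetric])
    moreover have "Re ?A \<ge> 0" "Re ?C \<ge> 0" "Re ?B \<ge> 0" "Im ?B = 0"
      using Ham_psd[OF pos, of a _ _ b f] ac eb cc ee True by auto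
    ultimately have "Re ?A + Re ?B + Re ?C = 0" "Im ?B = 0"
      by (metis plus_complex.sel(1) zero_complex.sel(1), simp)
    then have "Re ?B = 0" "Im ?B = 0" using \<open>Re ?A \<ge> 0\<close> \<open>Re ?C \<ge> 0\<close> \<open>Re ?B \<ge> 0\<close> by linarith+
    then have "?B = 0" by (simp add: complex_eqI)
    moreover have "a \<le> c'" "e' \<le> b" using ac eb cc ee True by auto
    ultimately have "Ham D hm a b c' e' f = 0"
      using Ham_kernel[OF pos _ _ fv] by blast
    then show ?thesis using fv unfolding gs_iff by auto
  qed
qed


lemma Gp_subsp: "subsp D a b (gs D hm a b c e)" by (rule gs_subsp)

lemma gs_slice:
  assumes ac: "a \<le> c" and eb: "e \<le> b" and x: "c \<le> c0" "e0 \<le> e" and \<rho>: "\<rho> \<in> outer D a b c e"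
    and f: "f \<in> gs D hm a b c0 e0"
  shows "slc D c e f \<rho> \<in> gs D hm c e c0 e0"
  using f Ham_slice[OF ac eb x \<rho>, of hm f] slc_zero slc_vecs by (auto simp: gs_iff)

lemma Gp_slice:
  assumes ac: "a \<le> c" and eb: "e \<le> b" and x: "c \<le> c0" "e0 \<le> e" and \<rho>: "\<rho> \<in> outer D a b c e"
  shows "slc D c e (Gp D hm a b c0 e0 f) \<rho> = Gp D hm c e c0 e0 (slc D c e f \<rho>)"
proof -
  let ?Gs = "Gp D hm c e c0 e0"
  define g where "g = (\<lambda>\<tau>. if \<tau> \<in> cfgs D a b then ?Gs (slc D c e f (zout c e \<tau>)) (rin c e \<tau>) else 0)"
  have A: "slc D c e g \<rho>' = ?Gs (slc D c e f \<rho>')" if \<rho>': "\<rho>' \<in> outer D a b c e" for \<rho>'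
  proof
    fix \<sigma>
    show "slc D c e g \<rho>' \<sigma> = ?Gs (slc D c e f \<rho>') \<sigma>"
    proof (cases "\<sigma> \<in> cfgs D c e")
      case True
      then show ?thesis
        using mrg_in[OF ac eb True \<rho>'] zout_mrg[OF \<rho>'] rin_mrg[OF True]
        by (simp add: slc_def g_def)
    next
      case False
      have "?Gs (slc D c e f \<rho>') \<in> vecs D c e" unfolding Gp_def by (rule proj_vecs[OF gs_subsp])
      then show ?thesis using False by (simp add: slc_def vecs_def)
    qed
  qed
  have gv: "g \<in> vecs D a b" by (simp add: g_def vecs_def)
  have gH: "Ham D hm a b c0 e0 g = 0"
  proof
    fix \<tau>
    show "Ham D hm a b c0 e0 g \<tau> = 0 \<tau>"
    proof (cases "\<tau> \<in> cfgs D a b")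
      case False
      then show ?thesis using Ham_vecs[of D hm a b c0 e0 g] by (simp add: vecs_def)
    next
      case True
      have z: "zout c e \<tau> \<in> outer D a b c e" by (rule zout_in[OF True])
      have r: "rin c e \<tau> \<in> cfgs D c e" by (rule rin_in[OF ac eb True])
      have "Ham D hm a b c0 e0 g \<tau> = slc D c e (Ham D hm a b c0 e0 g) (zout c e \<tau>) (rin c e \<tau>)"
        using r by (simp add: slc_def mrg_rin_zout)
      also have "\<dots> = Ham D hm c e c0 e0 (?Gs (slc D c e f (zout c e \<tau>))) (rin c e \<tau>)"
        unfolding Ham_slice[OF ac eb x z] A[OF z] ..
      also have "\<dots> = 0"
        using proj_in[OF gs_subsp, of D c e hm c0 e0 "slc D c e f (zout c e \<tau>)"]
        unfolding Gp_def gs_iff by simp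
      finally show ?thesis by simp
    qed
  qed
  have "Gp D hm a b c0 e0 f = g"
    unfolding Gp_def
  proof (rule proj_eqI[OF gs_subsp])
    show "g \<in> gs D hm a b c0 e0" using gv gH by (simp add: gs_iff)
  next
    fix u assume u: "u \<in> gs D hm a b c0 e0"
    have "inner_sp D a b u (f - g) = (\<Sum>\<rho>\<in>outer D a b c e. inner_sp D c e (slc D c e u \<rho>) (slc D c e f \<rho> - ?Gs (slc D c e f \<rho>)))"
      unfolding inner_slice[OF ac eb, of D u] slc_diff using A by (intro sum.cong refl) simp
    also have "\<dots> = 0"
      using proj_orth[OF gs_subsp gs_slice[OF ac eb x _ u]] unfolding Gp_def by (intro sum.neutral) blast
    finally show "inner_sp D a b u (f - g) = 0" .
  qed
  then show ?thesis using A[OF \<rho>] by simp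
qed

lemma gs_trv:
  assumes "f \<in> gs D hm a b c e"
  shows "trv t f \<in> gs D hm (a + t) (b + t) (c + t) (e + t)"
  using assms trv_vecs[of f D a b t] Ham_trv[of D hm a t b c e f] trv_zero by (auto simp: gs_iff)

lemma gs_trv_back:
  assumes "u \<in> gs D hm (a + t) (b + t) (c + t) (e + t)"
  shows "trv (-t) u \<in> gs D hm a b c e"
  using gs_trv[OF assms, of "-t"] by simp

lemma Gp_trv: "trv t (Gp D hm a b c e f) = Gp D hm (a + t) (b + t) (c + t) (e + t) (trv t f)"
  unfolding Gp_def
proof (rule proj_eqI[OF gs_subsp, symmetric])
  show "trv t (proj D a b (gs D hm a b c e) f) \<in> gs D hm (a + t) (b + t) (c + t) (e + t)"
    by (rule gs_trv[OF proj_in[OF gs_subsp]])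
next
  fix u assume u: "u \<in> gs D hm (a + t) (b + t) (c + t) (e + t)"
  have u': "trv (-t) u \<in> gs D hm a b c e" by (rule gs_trv_back[OF u])
  have "inner_sp D (a + t) (b + t) u (trv t f - trv t (proj D a b (gs D hm a b c e) f))
      = inner_sp D (a + t) (b + t) (trv t (trv (-t) u)) (trv t (f - proj D a b (gs D hm a b c e) f))"
    by (simp add: trv_trv trv_diff)
  also have "\<dots> = inner_sp D a b (trv (-t) u) (f - proj D a b (gs D hm a b c e) f)"
    by (rule inner_trv)
  also have "\<dots> = 0" by (rule proj_orth[OF gs_subsp u'])
  finally show "inner_sp D (a + t) (b + t) u (trv t f - trv t (proj D a b (gs D hm a b c e) f)) = 0" .
qed

lemma inner_fmP: "subsp D a b S \<Longrightarrow> inner_sp D a b f (f - proj D a b S f) = of_real (nsq D a b (f - proj D a b S f))"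
proof -
  assume S: "subsp D a b S"
  let ?P = "proj D a b S"
  have "inner_sp D a b (?P f) (f - ?P f) = 0" by (rule proj_orth[OF S proj_in[OF S]])
  moreover have "inner_sp D a b f (f - ?P f) = inner_sp D a b (f - ?P f) (f - ?P f) + inner_sp D a b (?P f) (f - ?P f)"
    by (simp add: inner_diff_left)
  ultimately show ?thesis by (simp add: inner_self_nsq)
qed

lemma gap_ineq:
  assumes pos: "positive_int D hm" and f: "f \<in> vecs D c e"
  shows "gap D hm c e * nsq D c e (f - Gp D hm c e c e f) \<le> Re (inner_sp D c e f (Ham D hm c e c e f))"
proof -
  define A where "A = (\<lambda>f. Re (inner_sp D c e f (\<lambda>\<sigma>. f \<sigma> - Gp D hm c e c e f \<sigma>)))"
  define B where "B = (\<lambda>f. Re (inner_sp D c e f (Ham D hm c e c e f)))"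
  have Aeq: "A g = nsq D c e (g - Gp D hm c e c e g)" for g
  proof -
    have "(\<lambda>\<sigma>. g \<sigma> - Gp D hm c e c e g \<sigma>) = g - Gp D hm c e c e g" by (rule ext) simp
    then show ?thesis unfolding A_def using inner_fmP[OF gs_subsp[of D c e hm c e], of g]
      unfolding Gp_def by simp
  qed
  have B0: "B g \<ge> 0" for g unfolding B_def using Ham_psd[OF pos order_refl order_refl] by blast
  have gap_eq: "gap D hm c e = Sup {g. \<forall>f\<in>vecs D c e. g * A f \<le> B f}"
    unfolding gap_def A_def B_def ..
  show ?thesis
  proof (cases "A f = 0")
    case True
    then show ?thesis using B0[of f] unfolding Aeq B_def by simp
  next
    case False
    then have Ap: "A f > 0" using nsq_nonneg unfolding Aeq by (metis less_eq_real_def)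
    have ne: "0 \<in> {g. \<forall>f\<in>vecs D c e. g * A f \<le> B f}" using B0 by simp
    have ub: "\<And>g. g \<in> {g. \<forall>f\<in>vecs D c e. g * A f \<le> B f} \<Longrightarrow> g \<le> B f / A f"
      using f Ap by (auto simp: pos_le_divide_eq)
    have "gap D hm c e \<le> B f / A f"
      unfolding gap_eq by (rule cSup_least) (use ne ub in blast)+
    then have "gap D hm c e * A f \<le> B f" using Ap by (simp add: pos_le_divide_eq)
    then show ?thesis unfolding Aeq B_def .
  qed
qed


lemma ineq_slice:
  assumes ac: "a \<le> c" and eb: "e \<le> b"
    and H: "\<And>h. h \<in> vecs D c e \<Longrightarrow> \<gamma> * nsq D c e (h - Gp D hm c e c e h) \<le> Re (inner_sp D c e h (Ham D hm c e c e h))"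
  shows "\<gamma> * nsq D a b (f - Gp D hm a b c e f) \<le> Re (inner_sp D a b f (Ham D hm a b c e f))"
proof -
  have "\<gamma> * nsq D a b (f - Gp D hm a b c e f)
      = (\<Sum>\<rho>\<in>outer D a b c e. \<gamma> * nsq D c e (slc D c e f \<rho> - Gp D hm c e c e (slc D c e f \<rho>)))"
    unfolding nsq_slice[OF ac eb, of D] sum_distrib_left
    by (intro sum.cong refl) (simp add: slc_diff Gp_slice[OF ac eb order_refl order_refl])
  also have "\<dots> \<le> (\<Sum>\<rho>\<in>outer D a b c e. Re (inner_sp D c e (slc D c e f \<rho>) (Ham D hm c e c e (slc D c e f \<rho>))))"
    by (intro sum_mono H slc_vecs)
  also have "\<dots> = Re (inner_sp D a b f (Ham D hm a b c e f))"
    unfolding inner_slice[OF ac eb, of D f] Re_sum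
    by (intro sum.cong refl) (simp add: Ham_slice[OF ac eb order_refl order_refl])
  finally show ?thesis .
qed

lemma trv_vecs': "f \<in> vecs D a b \<Longrightarrow> a' = a + t \<Longrightarrow> b' = b + t \<Longrightarrow> trv t f \<in> vecs D a' b'"
  using trv_vecs by blast
lemma inner_trv': "a' = a + t \<Longrightarrow> b' = b + t \<Longrightarrow> inner_sp D a' b' (trv t f) (trv t g) = inner_sp D a b f g"
  using inner_trv by blast
lemma nsq_trv': "a' = a + t \<Longrightarrow> b' = b + t \<Longrightarrow> nsq D a' b' (trv t f) = nsq D a b f"
  using nsq_trv by blast
lemma Ham_trv': "a' = a + t \<Longrightarrow> b' = b + t \<Longrightarrow> c' = c + t \<Longrightarrow> e' = e + t \<Longrightarrow>
    Ham D hm a' b' c' e' (trv t f) = trv t (Ham D hm a b c e f)"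
  using Ham_trv by blast
lemma Gp_trv': "a' = a + t \<Longrightarrow> b' = b + t \<Longrightarrow> c' = c + t \<Longrightarrow> e' = e + t \<Longrightarrow>
    Gp D hm a' b' c' e' (trv t f) = trv t (Gp D hm a b c e f)"
  using Gp_trv by metis
lemma gs_trv': "f \<in> gs D hm a b c e \<Longrightarrow> a' = a + t \<Longrightarrow> b' = b + t \<Longrightarrow> c' = c + t \<Longrightarrow> e' = e + t \<Longrightarrow>
    trv t f \<in> gs D hm a' b' c' e'"
  using gs_trv by blast

lemma ineq_shift:
  assumes H: "\<And>h. h \<in> vecs D c e \<Longrightarrow> \<gamma> * nsq D c e (h - Gp D hm c e c e h) \<le> Re (inner_sp D c e h (Ham D hm c e c e h))"
    and c': "c' = c + t" and e': "e' = e + t" and h: "h \<in> vecs D c' e'"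
  shows "\<gamma> * nsq D c' e' (h - Gp D hm c' e' c' e' h) \<le> Re (inner_sp D c' e' h (Ham D hm c' e' c' e' h))"
proof -
  define h' where "h' = trv (-t) h"
  have h'v: "h' \<in> vecs D c e" unfolding h'_def by (rule trv_vecs'[OF h]) (simp_all add: c' e')
  have hh: "h = trv t h'" unfolding h'_def by (simp add: trv_trv)
  have "h - Gp D hm c' e' c' e' h = trv t (h' - Gp D hm c e c e h')"
    unfolding hh trv_diff by (simp add: Gp_trv'[OF c' e' c' e'])
  then have 1: "nsq D c' e' (h - Gp D hm c' e' c' e' h) = nsq D c e (h' - Gp D hm c e c e h')"
    by (simp add: nsq_trv'[OF c' e'])
  have 2: "inner_sp D c' e' h (Ham D hm c' e' c' e' h) = inner_sp D c e h' (Ham D hm c e c e h')"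
    unfolding hh by (simp add: Ham_trv'[OF c' e' c' e'] inner_trv'[OF c' e'])
  show ?thesis unfolding 1 2 by (rule H[OF h'v])
qed

lemma eps_set_le1':
  assumes nm: "norm_sp D (-m) n \<psi> = 1"
  shows "Re (inner_sp D (-m) n \<psi> (Gp D hm (-m) n 0 n \<psi>)) \<le> 1"
proof -
  have "nsq D (-m) n \<psi> = 1" using nm nsq_nonneg[of D "-m" n \<psi>] unfolding norm_sp_def nsq_def
    by (metis real_sqrt_eq_1_iff)
  moreover have "Re (inner_sp D (-m) n \<psi> (Gp D hm (-m) n 0 n \<psi>)) = nsq D (-m) n (Gp D hm (-m) n 0 n \<psi>)"
    unfolding Gp_def proj_quad[OF gs_subsp] by simp
  moreover have "nsq D (-m) n (Gp D hm (-m) n 0 n \<psi>) \<le> nsq D (-m) n \<psi>"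
    unfolding Gp_def by (rule proj_nsq_le[OF gs_subsp])
  ultimately show ?thesis by simp
qed

lemma eps_bdd: "bdd_above (insert 0 {Re (inner_sp D (-m) n \<psi> (Gp D hm (-m) n 0 n \<psi>)) | \<psi>.
        \<psi> \<in> gs D hm (-m) n (-m) 0 \<and>
        (\<forall>u\<in>gs D hm (-m) n (-m) n. inner_sp D (-m) n u \<psi> = 0) \<and>
        norm_sp D (-m) n \<psi> = 1})"
  unfolding bdd_above_def by (auto intro!: exI[of _ 1] eps_set_le1')

lemma eps_le1: "eps D hm m n \<le> 1"
  unfolding eps_def by (rule cSup_least) (auto intro: eps_set_le1')

lemma eps_ge0: "eps D hm m n \<ge> 0"
  unfolding eps_def by (rule cSup_upper[OF _ eps_bdd]) simp

lemma eps_mn_ge: "m' \<ge> m \<Longrightarrow> eps D hm m' n \<le> eps_mn D hm m n"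
  unfolding eps_mn_def
  apply (rule cSup_upper)
  subgoal by blast
  subgoal by (auto simp: bdd_above_def intro!: exI[of _ 1] eps_le1)
  done

lemma eps_small:
  assumes psi: "\<psi> \<in> gs D hm (-m) n (-m) 0" and orth: "Gp D hm (-m) n (-m) n \<psi> = 0"
  shows "Re (inner_sp D (-m) n \<psi> (Gp D hm (-m) n 0 n \<psi>)) \<le> eps D hm m n * nsq D (-m) n \<psi>"
proof (cases "nsq D (-m) n \<psi> = 0")
  case True
  then show ?thesis using nsq_zero_inner by simp
next
  case False
  define r where "r = nsq D (-m) n \<psi>"
  have r0: "r > 0" using False nsq_nonneg[of D "-m" n \<psi>] unfolding r_def by linarith
  define k where "k = complex_of_real (1 / sqrt r)"
  define \<psi>' where "\<psi>' = sc k \<psi>"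
  have kr: "1 / sqrt r * (1 / sqrt r) = 1 / r" using r0 by (simp add: real_sqrt_mult_self)
  have "cnj k * k = complex_of_real (1 / sqrt r) * complex_of_real (1 / sqrt r)" by (simp add: k_def)
  also have "\<dots> = complex_of_real (1 / sqrt r * (1 / sqrt r))" by (simp only: of_real_mult)
  finally have kk: "cnj k * k = complex_of_real (1 / r)" unfolding kr .
  have in1: "\<psi>' \<in> gs D hm (-m) n (-m) 0" unfolding \<psi>'_def by (rule subsp_sc[OF gs_subsp psi])
  have in2: "\<forall>u\<in>gs D hm (-m) n (-m) n. inner_sp D (-m) n u \<psi>' = 0"
    using orth unfolding \<psi>'_def Gp_def proj_orth_zero[OF gs_subsp, symmetric]
    by (simp add: inner_sc_right)
  have "inner_sp D (-m) n \<psi>' \<psi>' = cnj k * k * inner_sp D (-m) n \<psi> \<psi>"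
    unfolding \<psi>'_def by (simp add: inner_sc_left inner_sc_right)
  also have "\<dots> = 1" unfolding kk inner_self_nsq r_def[symmetric] using r0 by simp
  finally have in3: "norm_sp D (-m) n \<psi>' = 1" unfolding norm_sp_def by simp
  have val: "Re (inner_sp D (-m) n \<psi>' (Gp D hm (-m) n 0 n \<psi>')) = Re (inner_sp D (-m) n \<psi> (Gp D hm (-m) n 0 n \<psi>)) / r"
  proof -
    have "inner_sp D (-m) n \<psi>' (Gp D hm (-m) n 0 n \<psi>') = cnj k * k * inner_sp D (-m) n \<psi> (Gp D hm (-m) n 0 n \<psi>)"
      unfolding \<psi>'_def Gp_def proj_sc[OF gs_subsp] by (simp add: inner_sc_left inner_sc_right)
    then show ?thesis unfolding kk by simp
  qed
  have "Re (inner_sp D (-m) n \<psi>' (Gp D hm (-m) n 0 n \<psi>')) \<le> eps D hm m n"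
    unfolding eps_def by (rule cSup_upper[OF _ eps_bdd]) (use in1 in2 in3 in blast)
  then show ?thesis using r0 unfolding val r_def[symmetric] by (simp add: divide_le_eq mult.commute)
qed


lemma bond_sum: "bond D hm a b x (\<lambda>\<sigma>. \<Sum>y\<in>Y. g y \<sigma>) = (\<lambda>\<sigma>. \<Sum>y\<in>Y. bond D hm a b x (g y) \<sigma>)"
  by (simp add: bond_def fun_eq_iff sum_distrib_left sum.swap[of _ Y])

lemma sum4_swap: "(\<Sum>k<D. \<Sum>l<D. \<Sum>k'<D. \<Sum>l'<D. F k l k' l') = (\<Sum>k'<D. \<Sum>l'<D. \<Sum>k<D. \<Sum>l<D. F k l k' l')"
proof -
  have "(\<Sum>k<D. \<Sum>l<D. \<Sum>k'<D. \<Sum>l'<D. F k l k' l') = (\<Sum>k<D. \<Sum>k'<D. \<Sum>l<D. \<Sum>l'<D. F k l k' l')"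
    by (rule sum.cong[OF refl], rule sum.swap)
  also have "\<dots> = (\<Sum>k'<D. \<Sum>k<D. \<Sum>l<D. \<Sum>l'<D. F k l k' l')" by (rule sum.swap)
  also have "\<dots> = (\<Sum>k'<D. \<Sum>k<D. \<Sum>l'<D. \<Sum>l<D. F k l k' l')"
    by (rule sum.cong[OF refl], rule sum.cong[OF refl], rule sum.swap)
  also have "\<dots> = (\<Sum>k'<D. \<Sum>l'<D. \<Sum>k<D. \<Sum>l<D. F k l k' l')"
    by (rule sum.cong[OF refl], rule sum.swap)
  finally show ?thesis .
qed

lemma bond_comm:
  assumes ax: "a \<le> x" and xy: "x + 2 \<le> y" and yb: "y + 1 \<le> b"
  shows "bond D hm a b x (bond D hm a b y f) = bond D hm a b y (bond D hm a b x f)"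
proof
  fix \<sigma> :: cfg
  show "bond D hm a b x (bond D hm a b y f) \<sigma> = bond D hm a b y (bond D hm a b x f) \<sigma>"
  proof (cases "\<sigma> \<in> cfgs D a b")
    case False
    then show ?thesis by (simp add: bond_def)
  next
    case True
    have i1: "\<And>k l. k < D \<Longrightarrow> l < D \<Longrightarrow> \<sigma>(x := k, x + 1 := l) \<in> cfgs D a b"
      using upd_in_cfgs[OF True] ax xy yb by simp
    have i2: "\<And>k l. k < D \<Longrightarrow> l < D \<Longrightarrow> \<sigma>(y := k, y + 1 := l) \<in> cfgs D a b"
      using upd_in_cfgs[OF True] ax xy yb by simp
    have v1: "\<And>k l. (\<sigma>(x := k, x + 1 := l)) y = \<sigma> y" "\<And>k l. (\<sigma>(x := k, x + 1 := l)) (y + 1) = \<sigma> (y + 1)"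
      using xy by auto
    have v2: "\<And>k l. (\<sigma>(y := k, y + 1 := l)) x = \<sigma> x" "\<And>k l. (\<sigma>(y := k, y + 1 := l)) (x + 1) = \<sigma> (x + 1)"
      using xy by auto
    have c: "\<And>k l k' l'. \<sigma>(x := k, x + 1 := l, y := k', y + 1 := l') = \<sigma>(y := k', y + 1 := l', x := k, x + 1 := l)"
      using xy by (auto simp: fun_eq_iff)
    have "bond D hm a b x (bond D hm a b y f) \<sigma> =
       (\<Sum>k<D. \<Sum>l<D. \<Sum>k'<D. \<Sum>l'<D. hm (\<sigma> x) (\<sigma> (x + 1)) k l * (hm (\<sigma> y) (\<sigma> (y + 1)) k' l' *
           f (\<sigma>(x := k, x + 1 := l, y := k', y + 1 := l'))))"
      using True i1 v1 by (simp add: bond_def sum_distrib_left)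
    also have "\<dots> = (\<Sum>k'<D. \<Sum>l'<D. \<Sum>k<D. \<Sum>l<D. hm (\<sigma> x) (\<sigma> (x + 1)) k l * (hm (\<sigma> y) (\<sigma> (y + 1)) k' l' *
           f (\<sigma>(x := k, x + 1 := l, y := k', y + 1 := l'))))"
      by (rule sum4_swap)
    also have "\<dots> = bond D hm a b y (bond D hm a b x f) \<sigma>"
      using True i2 v2 by (simp add: bond_def sum_distrib_left c mult.left_commute)
    finally show ?thesis .
  qed
qed

lemma Ham_comm:
  assumes ac: "a \<le> p1" and ce: "q1 + 1 \<le> p2" and eb: "q2 \<le> b"
  shows "Ham D hm a b p1 q1 (Ham D hm a b p2 q2 f) = Ham D hm a b p2 q2 (Ham D hm a b p1 q1 f)"
proof -
  have "Ham D hm a b p1 q1 (Ham D hm a b p2 q2 f) = (\<lambda>\<sigma>. \<Sum>x\<in>{p1..<q1}. \<Sum>y\<in>{p2..<q2}. bond D hm a b x (bond D hm a b y f) \<sigma>)"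
    unfolding Ham_def bond_sum ..
  also have "\<dots> = (\<lambda>\<sigma>. \<Sum>x\<in>{p1..<q1}. \<Sum>y\<in>{p2..<q2}. bond D hm a b y (bond D hm a b x f) \<sigma>)"
  proof (intro ext sum.cong refl)
    fix \<sigma> x y assume x: "x \<in> {p1..<q1}" and y: "y \<in> {p2..<q2}"
    have "bond D hm a b x (bond D hm a b y f) = bond D hm a b y (bond D hm a b x f)"
      by (rule bond_comm) (use x y ac ce eb in auto)
    then show "bond D hm a b x (bond D hm a b y f) \<sigma> = bond D hm a b y (bond D hm a b x f) \<sigma>" by simp
  qed
  also have "\<dots> = Ham D hm a b p2 q2 (Ham D hm a b p1 q1 f)"
    unfolding Ham_def bond_sum by (rule ext, rule sum.swap)
  finally show ?thesis .
qed

lemma proj_comm_op: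
  fixes A :: "vec \<Rightarrow> vec"
  assumes Adiff: "\<And>f g. A (f - g) = A f - A g"
    and Av: "\<And>f. f \<in> vecs D a b \<Longrightarrow> A f \<in> vecs D a b"
    and Aherm: "\<And>f g. f \<in> vecs D a b \<Longrightarrow> g \<in> vecs D a b \<Longrightarrow> inner_sp D a b f (A g) = inner_sp D a b (A f) g"
    and comm: "\<And>f. f \<in> vecs D a b \<Longrightarrow> A (Ham D hm a b c e f) = Ham D hm a b c e (A f)"
    and f: "f \<in> vecs D a b"
  shows "Gp D hm a b c e (A f) = A (Gp D hm a b c e f)"
proof -
  let ?S = "gs D hm a b c e"
  let ?P = "proj D a b ?S"
  have A0: "A 0 = 0" using Adiff[of 0 0] by simp
  have pres: "A u \<in> ?S" if u: "u \<in> ?S" for u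
  proof -
    have uv: "u \<in> vecs D a b" and Hu: "Ham D hm a b c e u = 0" using u by (auto simp: gs_iff)
    have "Ham D hm a b c e (A u) = A (Ham D hm a b c e u)" using comm[OF uv] by simp
    then show ?thesis using Hu A0 Av[OF uv] by (simp add: gs_iff)
  qed
  have "?P (A f) = A (?P f)"
  proof (rule proj_eqI[OF gs_subsp])
    show "A (?P f) \<in> ?S" by (rule pres[OF proj_in[OF gs_subsp]])
  next
    fix u assume u: "u \<in> ?S"
    have uv: "u \<in> vecs D a b" using u by (auto simp: gs_iff)
    have "inner_sp D a b u (A f - A (?P f)) = inner_sp D a b u (A (f - ?P f))" by (simp add: Adiff)
    also have "\<dots> = inner_sp D a b (A u) (f - ?P f)"
      by (rule Aherm[OF uv vecs_diff[OF f proj_vecs[OF gs_subsp]]])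
    also have "\<dots> = 0" by (rule proj_orth[OF gs_subsp pres[OF u]])
    finally show "inner_sp D a b u (A f - A (?P f)) = 0" .
  qed
  then show ?thesis unfolding Gp_def .
qed

lemma Gp_comm:
  assumes pos: "positive_int D hm" and ac: "a \<le> p1" and ce: "q1 + 1 \<le> p2" and eb: "q2 \<le> b"
    and pq: "p2 \<le> q2" and f: "f \<in> vecs D a b"
  shows "Gp D hm a b p1 q1 (Gp D hm a b p2 q2 f) = Gp D hm a b p2 q2 (Gp D hm a b p1 q1 f)"
proof -
  have q1b: "q1 \<le> b" using ce eb pq by linarith
  have step1: "Gp D hm a b p2 q2 (Ham D hm a b p1 q1 g) = Ham D hm a b p1 q1 (Gp D hm a b p2 q2 g)"
    if g: "g \<in> vecs D a b" for g
  proof (rule proj_comm_op[OF Ham_diff Ham_vecs _ _ g])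
    show "\<And>f g. f \<in> vecs D a b \<Longrightarrow> g \<in> vecs D a b \<Longrightarrow>
      inner_sp D a b f (Ham D hm a b p1 q1 g) = inner_sp D a b (Ham D hm a b p1 q1 f) g"
      by (rule Ham_herm[OF pos ac q1b])
    show "\<And>f. f \<in> vecs D a b \<Longrightarrow> Ham D hm a b p1 q1 (Ham D hm a b p2 q2 f) = Ham D hm a b p2 q2 (Ham D hm a b p1 q1 f)"
      by (rule Ham_comm[OF ac ce eb])
  qed
  show ?thesis
  proof (rule proj_comm_op[OF _ _ _ _ f])
    show "\<And>f g. Gp D hm a b p2 q2 (f - g) = Gp D hm a b p2 q2 f - Gp D hm a b p2 q2 g"
      unfolding Gp_def by (rule proj_diff[OF gs_subsp])
    show "\<And>f. f \<in> vecs D a b \<Longrightarrow> Gp D hm a b p2 q2 f \<in> vecs D a b"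
      unfolding Gp_def by (rule proj_vecs[OF gs_subsp])
    show "\<And>f g. f \<in> vecs D a b \<Longrightarrow> g \<in> vecs D a b \<Longrightarrow>
      inner_sp D a b f (Gp D hm a b p2 q2 g) = inner_sp D a b (Gp D hm a b p2 q2 f) g"
      unfolding Gp_def by (rule proj_self_adj[OF gs_subsp, symmetric])
    show "\<And>f. f \<in> vecs D a b \<Longrightarrow> Gp D hm a b p2 q2 (Ham D hm a b p1 q1 f) = Ham D hm a b p1 q1 (Gp D hm a b p2 q2 f)"
      by (rule step1)
  qed
qed


lemma RL_norm:
  fixes s t r u \<omega> \<xi> :: real
  assumes st: "s\<^sup>2 + t\<^sup>2 = 1" and s0: "s \<ge> 0" and t0: "t \<ge> 0" and ts: "t < s"
    and ru: "r\<^sup>2 + u\<^sup>2 = 1" and r0: "r \<ge> 0" and u0: "u \<ge> 0" and rt: "r\<^sup>2 \<le> t\<^sup>2"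
    and \<xi>0: "\<xi> \<ge> 0" and \<omega>0: "\<omega> \<ge> 0" and \<omega>u: "\<omega> \<ge> u - \<xi> * r"
  shows "\<omega>\<^sup>2 + t * (s - t) * \<xi>\<^sup>2 \<ge> s * (s - t)"
proof -
  define c where "c = t * (s - t)"
  define \<beta> where "\<beta> = s * (s - t)"
  have c0: "c \<ge> 0" unfolding c_def using t0 ts by simp
  have key: "c * u\<^sup>2 - \<beta> * (c + r\<^sup>2) = (s\<^sup>2 - t\<^sup>2) * (t\<^sup>2 - r\<^sup>2)"
  proof -
    have u2: "u\<^sup>2 = 1 - r\<^sup>2" using ru by simp
    have "c * u\<^sup>2 - \<beta> * (c + r\<^sup>2) = c * (1 - \<beta>) - r\<^sup>2 * (c + \<beta>)"
      unfolding u2 by (simp add: algebra_simps)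
    also have "c * (1 - \<beta>) = t\<^sup>2 * (s\<^sup>2 - t\<^sup>2)"
    proof -
      have b1: "1 - \<beta> = t * (t + s)" unfolding \<beta>_def using st by (simp add: power2_eq_square algebra_simps)
      show ?thesis unfolding b1 c_def by (simp add: power2_eq_square algebra_simps)
    qed
    also have "c + \<beta> = s\<^sup>2 - t\<^sup>2" unfolding c_def \<beta>_def by (simp add: power2_eq_square algebra_simps)
    finally show ?thesis by (simp add: algebra_simps)
  qed
  have stpos: "s\<^sup>2 - t\<^sup>2 > 0" using ts t0 by (simp add: power_strict_mono)
  have main: "c * u\<^sup>2 \<ge> \<beta> * (c + r\<^sup>2)"
    using key stpos rt by (smt (verit) mult_nonneg_nonneg)
  show ?thesis
  proof (cases "u - \<xi> * r \<ge> 0")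
    case True
    have w2: "\<omega>\<^sup>2 \<ge> (u - \<xi> * r)\<^sup>2" using True \<omega>u by (simp add: power_mono)
    have id: "(c + r\<^sup>2) * ((u - \<xi> * r)\<^sup>2 + c * \<xi>\<^sup>2) = (r * u - (c + r\<^sup>2) * \<xi>)\<^sup>2 + c * u\<^sup>2"
      by (simp add: power2_eq_square algebra_simps)
    show ?thesis
    proof (cases "c + r\<^sup>2 > 0")
      case True
      have "(c + r\<^sup>2) * ((u - \<xi> * r)\<^sup>2 + c * \<xi>\<^sup>2) \<ge> (c + r\<^sup>2) * \<beta>"
        using id main by (smt (verit) mult.commute zero_le_power2)
      then have "(u - \<xi> * r)\<^sup>2 + c * \<xi>\<^sup>2 \<ge> \<beta>" using True by simp
      then show ?thesis using w2 unfolding c_def \<beta>_def by linarith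
    next
      case False
      then have "c = 0" "r\<^sup>2 = 0" using c0 zero_le_power2[of r] by linarith+
      then have "c = 0" "r = 0" by simp_all
      then have "t = 0" unfolding c_def using ts by simp
      then have "s = 1" using st s0 by (simp add: power2_eq_1_iff)
      have "u = 1" using ru \<open>r = 0\<close> u0 by (simp add: power2_eq_1_iff)
      then have "\<omega> \<ge> 1" using \<omega>u \<open>r = 0\<close> by simp
      then have "\<omega>\<^sup>2 \<ge> 1" by (simp add: one_le_power)
      then show ?thesis using \<open>t = 0\<close> \<open>s = 1\<close> by simp
    qed
  next
    case False
    then have xr: "\<xi> * r > u" by simp
    then have rpos: "r > 0" using u0 \<xi>0 r0 by (metis less_eq_real_def mult_zero_right not_le)
    have cr: "c + r\<^sup>2 > 0" using rpos c0 by (simp add: add_nonneg_pos)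
    have "(\<xi> * r)\<^sup>2 > u\<^sup>2" using xr u0 by (simp add: power_strict_mono)
    then have "(c + r\<^sup>2) * \<xi>\<^sup>2 \<ge> u\<^sup>2" using c0 \<xi>0
      by (simp add: power_mult_distrib algebra_simps) (smt (verit) mult_nonneg_nonneg zero_le_power2)
    then have "(c + r\<^sup>2) * (c * \<xi>\<^sup>2) \<ge> c * u\<^sup>2" using c0
      by (metis mult.left_commute mult_left_mono)
    then have "(c + r\<^sup>2) * (c * \<xi>\<^sup>2) \<ge> (c + r\<^sup>2) * \<beta>" using main by (simp add: mult.commute)
    then have "c * \<xi>\<^sup>2 \<ge> \<beta>" using cr by simp
    then show ?thesis using \<omega>0 unfolding c_def \<beta>_def by (smt (verit) zero_le_power2)
  qed
qed


lemma nsq_diff_sc: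
  "nsq D a b (f - sc (of_real \<mu>) g) = nsq D a b f - 2 * \<mu> * Re (inner_sp D a b f g) + \<mu>\<^sup>2 * nsq D a b g"
proof -
  have "inner_sp D a b (f - sc (of_real \<mu>) g) (f - sc (of_real \<mu>) g)
     = inner_sp D a b f f - of_real \<mu> * inner_sp D a b f g - of_real \<mu> * inner_sp D a b g f
       + of_real \<mu> * of_real \<mu> * inner_sp D a b g g"
    by (simp add: inner_diff_left inner_diff_right inner_sc_left inner_sc_right algebra_simps)
  moreover have "Re (inner_sp D a b g f) = Re (inner_sp D a b f g)"
  proof -
    have "inner_sp D a b g f = cnj (inner_sp D a b f g)" by (simp add: inner_cnj)
    then show ?thesis by simp
  qed
  ultimately show ?thesis unfolding nsq_def by (simp add: power2_eq_square)
qed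

lemma sqrt_sq_nsq: "(sqrt (nsq D a b f))\<^sup>2 = nsq D a b f"
  using nsq_nonneg by simp

lemma VL:
  fixes s t :: real
  assumes S: "subsp D a b S" and v1: "\<phi>1 \<in> vecs D a b" and v2: "\<phi>2 \<in> vecs D a b"
    and orth: "inner_sp D a b \<phi>1 \<phi>2 = 0"
    and eps: "nsq D a b (proj D a b S \<phi>2) \<le> t\<^sup>2 * nsq D a b \<phi>2"
    and st: "s\<^sup>2 + t\<^sup>2 = 1" and s0: "s \<ge> 0" and t0: "t \<ge> 0" and ts: "t < s"
  shows "nsq D a b ((\<phi>1 + \<phi>2) - proj D a b S (\<phi>1 + \<phi>2)) + t * (s - t) * nsq D a b \<phi>1
         \<ge> s * (s - t) * nsq D a b \<phi>2"
proof -
  let ?P = "proj D a b S"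
  define u where "u = \<phi>1 + \<phi>2"
  define Y2 where "Y2 = nsq D a b \<phi>2"
  define p2 where "p2 = nsq D a b (?P \<phi>2)"
  define q2 where "q2 = nsq D a b (\<phi>2 - ?P \<phi>2)"
  define X2 where "X2 = nsq D a b \<phi>1"
  define w2 where "w2 = nsq D a b (u - ?P u)"
  have c0: "t * (s - t) \<ge> 0" using t0 ts by simp
  have nn: "Y2 \<ge> 0" "p2 \<ge> 0" "q2 \<ge> 0" "X2 \<ge> 0" "w2 \<ge> 0"
    unfolding Y2_def p2_def q2_def X2_def w2_def by (simp_all add: nsq_nonneg)
  show ?thesis
  proof (cases "Y2 = 0")
    case True
    then show ?thesis using nn c0 unfolding Y2_def X2_def w2_def u_def by simp
  next
    case False
    then have Y2p: "Y2 > 0" using nn by simp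
    have pq: "p2 + q2 = Y2" unfolding p2_def q2_def Y2_def using proj_pyth[OF S, of \<phi>2] by simp
    have s2: "s\<^sup>2 > t\<^sup>2" using ts t0 by (simp add: power_strict_mono)
    have q2p: "q2 > 0"
    proof (rule ccontr)
      assume "\<not> q2 > 0"
      then have "q2 = 0" using nn by simp
      then have "Y2 \<le> t\<^sup>2 * Y2" using eps pq unfolding p2_def Y2_def by simp
      moreover have "s\<^sup>2 * Y2 = Y2 - t\<^sup>2 * Y2" proof -
        have "Y2 * (s\<^sup>2 + t\<^sup>2) = Y2" using st by simp
        then show ?thesis by (simp add: algebra_simps)
      qed
      ultimately have "s\<^sup>2 * Y2 \<le> 0" by simp
      then show False using Y2p s2 t0
        by (smt (verit) mult_pos_pos zero_le_power2)
    qed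
    define Y where "Y = sqrt Y2"
    define p where "p = sqrt p2"
    define q where "q = sqrt q2"
    define X where "X = sqrt X2"
    define w where "w = sqrt w2"
    have Yp: "Y > 0" unfolding Y_def using Y2p by simp
    have qp: "q > 0" unfolding q_def using q2p by simp
    have sq: "Y\<^sup>2 = Y2" "p\<^sup>2 = p2" "q\<^sup>2 = q2" "X\<^sup>2 = X2" "w\<^sup>2 = w2"
      unfolding Y_def p_def q_def X_def w_def using nn by simp_all
    have nn2: "p \<ge> 0" "X \<ge> 0" "w \<ge> 0" unfolding p_def X_def w_def using nn by simp_all
    define v where "v = \<phi>2 - ?P \<phi>2"
    have I1: "inner_sp D a b (u - ?P u) v = inner_sp D a b u v"
      using proj_orth[OF S proj_in[OF S], of u \<phi>2] unfolding v_def by (simp add: inner_diff_left)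
    have I2: "inner_sp D a b u v = of_real q2 - inner_sp D a b \<phi>1 (?P \<phi>2)"
      unfolding u_def v_def q2_def inner_add_left
      using inner_fmP[OF S, of \<phi>2] orth by (simp add: inner_diff_right)
    define \<mu> where "\<mu> = p2 / Y2"
    have I3: "inner_sp D a b \<phi>1 (?P \<phi>2) = inner_sp D a b \<phi>1 (?P \<phi>2 - sc (of_real \<mu>) \<phi>2)"
      using orth by (simp add: inner_diff_right inner_sc_right)
    have PP: "Re (inner_sp D a b (?P \<phi>2) \<phi>2) = p2"
    proof -
      have "inner_sp D a b (?P \<phi>2) \<phi>2 = cnj (inner_sp D a b \<phi>2 (?P \<phi>2))" by (simp add: inner_cnj)
      then show ?thesis unfolding proj_quad[OF S] p2_def by simp
    qed
    have N3: "nsq D a b (?P \<phi>2 - sc (of_real \<mu>) \<phi>2) = p2 * q2 / Y2"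
    proof -
      have "nsq D a b (?P \<phi>2 - sc (of_real \<mu>) \<phi>2) = p2 - 2 * \<mu> * p2 + \<mu>\<^sup>2 * Y2"
        unfolding nsq_diff_sc PP p2_def[symmetric] Y2_def[symmetric] ..
      also have "\<dots> = p2 - \<mu> * p2"
        unfolding \<mu>_def using Y2p by (simp add: power2_eq_square)
      also have "\<dots> = p2 * (Y2 - p2) / Y2"
        unfolding \<mu>_def using Y2p by (simp add: field_simps)
      also have "\<dots> = p2 * q2 / Y2" using pq by simp
      finally show ?thesis .
    qed
    have B1: "cmod (inner_sp D a b \<phi>1 (?P \<phi>2)) \<le> X * (p * q / Y)"
    proof -
      have "cmod (inner_sp D a b \<phi>1 (?P \<phi>2)) \<le> sqrt X2 * sqrt (p2 * q2 / Y2)"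
        unfolding I3 X2_def N3[symmetric] by (rule cauchy_schwarz)
      also have "sqrt (p2 * q2 / Y2) = p * q / Y"
        unfolding p_def q_def Y_def by (simp add: real_sqrt_mult real_sqrt_divide)
      finally show ?thesis unfolding X_def .
    qed
    have B2: "cmod (inner_sp D a b (u - ?P u) v) \<le> w * q"
      unfolding w_def q_def w2_def q2_def v_def by (rule cauchy_schwarz)
    have "Re (inner_sp D a b (u - ?P u) v) = q2 - Re (inner_sp D a b \<phi>1 (?P \<phi>2))"
      unfolding I1 I2 by simp
    moreover have "Re (inner_sp D a b \<phi>1 (?P \<phi>2)) \<le> X * (p * q / Y)"
      using B1 complex_Re_le_cmod order_trans by blast
    moreover have "Re (inner_sp D a b (u - ?P u) v) \<le> w * q"
      using B2 complex_Re_le_cmod order_trans by blast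
    ultimately have "w * q \<ge> q2 - X * (p * q / Y)" by linarith
    then have "w * q \<ge> (q - X * p / Y) * q" unfolding sq(3)[symmetric] by (simp add: algebra_simps power2_eq_square)
    then have wq: "w \<ge> q - X * p / Y" using qp by simp
    have R: "(w / Y)\<^sup>2 + t * (s - t) * (X / Y)\<^sup>2 \<ge> s * (s - t)"
    proof (rule RL_norm[OF st s0 t0 ts])
      show "(p / Y)\<^sup>2 + (q / Y)\<^sup>2 = 1" using pq sq Yp Y2p by (simp add: power_divide add_divide_distrib[symmetric])
      show "p / Y \<ge> 0" "q / Y \<ge> 0" "X / Y \<ge> 0" "w / Y \<ge> 0" using nn2 qp Yp by simp_all
      show "(p / Y)\<^sup>2 \<le> t\<^sup>2"
        using eps Yp sq Y2p unfolding p2_def[symmetric] Y2_def[symmetric] by (simp add: power_divide divide_le_eq)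
      show "w / Y \<ge> q / Y - X / Y * (p / Y)"
      proof -
        have "q / Y - X / Y * (p / Y) = (q - X * p / Y) / Y" using Yp by (simp add: field_simps)
        also have "\<dots> \<le> w / Y" using wq Yp by (simp add: divide_right_mono)
        finally show ?thesis .
      qed
    qed
    then have "((w / Y)\<^sup>2 + t * (s - t) * (X / Y)\<^sup>2) * Y\<^sup>2 \<ge> s * (s - t) * Y\<^sup>2"
      by (simp add: mult_right_mono)
    moreover have "((w / Y)\<^sup>2 + t * (s - t) * (X / Y)\<^sup>2) * Y\<^sup>2 = w\<^sup>2 + t * (s - t) * X\<^sup>2"
      using Yp by (simp add: power_divide distrib_right)
    ultimately have "w\<^sup>2 + t * (s - t) * X\<^sup>2 \<ge> s * (s - t) * Y\<^sup>2" by simp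
    then show ?thesis unfolding sq w2_def X2_def Y2_def u_def .
  qed
qed


lemma gap_big:
  assumes pos: "positive_int D hm" and ac: "a \<le> c" and eb: "e \<le> b" and f: "f \<in> vecs D a b"
  shows "gap D hm c e * nsq D a b (f - Gp D hm a b c e f) \<le> Re (inner_sp D a b f (Ham D hm a b c e f))"
  by (rule ineq_slice[OF ac eb gap_ineq[OF pos]])

lemma gap_big_shift:
  assumes pos: "positive_int D hm" and ac: "a \<le> c'" and eb: "e' \<le> b" and f: "f \<in> vecs D a b"
    and c': "c' = c + t" and e': "e' = e + t"
  shows "gap D hm c e * nsq D a b (f - Gp D hm a b c' e' f) \<le> Re (inner_sp D a b f (Ham D hm a b c' e' f))"
  by (rule ineq_slice[OF ac eb ineq_shift[OF gap_ineq[OF pos] c' e']])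

lemma eps_slice_shift:
  assumes psi: "\<psi> \<in> gs D hm 1 N 1 (N - n)" and orth: "Gp D hm 1 N 1 N \<psi> = 0"
  shows "Re (inner_sp D 1 N \<psi> (Gp D hm 1 N (N - n) N \<psi>)) \<le> eps D hm (N - n - 1) n * nsq D 1 N \<psi>"
proof -
  define t where "t = n - N"
  define \<psi>' where "\<psi>' = trv t \<psi>"
  have e1: "- (N - n - 1) = 1 + t" "n = N + t" "0 = N - n + t" unfolding t_def by simp_all
  have g1: "\<psi>' \<in> gs D hm (- (N - n - 1)) n (- (N - n - 1)) 0"
    unfolding \<psi>'_def by (rule gs_trv'[OF psi e1(1) e1(2) e1(1) e1(3)])
  have g2: "Gp D hm (- (N - n - 1)) n (- (N - n - 1)) n \<psi>' = 0"
    unfolding \<psi>'_def Gp_trv'[OF e1(1) e1(2) e1(1) e1(2)] orth trv_zero ..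
  have v1: "inner_sp D (- (N - n - 1)) n \<psi>' (Gp D hm (- (N - n - 1)) n 0 n \<psi>') = inner_sp D 1 N \<psi> (Gp D hm 1 N (N - n) N \<psi>)"
    unfolding \<psi>'_def Gp_trv'[OF e1(1) e1(2) e1(3) e1(2)] inner_trv'[OF e1(1) e1(2)] ..
  have v2: "nsq D (- (N - n - 1)) n \<psi>' = nsq D 1 N \<psi>"
    unfolding \<psi>'_def nsq_trv'[OF e1(1) e1(2)] ..
  show ?thesis using eps_small[OF g1 g2] unfolding v1 v2 .
qed

lemma eps_big:
  assumes L1: "1 \<le> N - n" and n0: "0 \<le> n" and Nb: "N \<le> b"
    and phi: "\<phi> \<in> gs D hm 1 b 1 (N - n)" and orth: "Gp D hm 1 b 1 N \<phi> = 0"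
  shows "Re (inner_sp D 1 b \<phi> (Gp D hm 1 b (N - n) N \<phi>)) \<le> eps D hm (N - n - 1) n * nsq D 1 b \<phi>"
proof -
  have a: "(1::int) \<le> 1" by simp
  have LN: "N - n \<le> N" using n0 by simp
  have "Re (inner_sp D 1 b \<phi> (Gp D hm 1 b (N - n) N \<phi>))
      = (\<Sum>\<rho>\<in>outer D 1 b 1 N. Re (inner_sp D 1 N (slc D 1 N \<phi> \<rho>) (Gp D hm 1 N (N - n) N (slc D 1 N \<phi> \<rho>))))"
    unfolding inner_slice[OF a Nb, of D \<phi>] Re_sum
    by (intro sum.cong refl) (simp add: Gp_slice[OF a Nb L1 order_refl])
  also have "\<dots> \<le> (\<Sum>\<rho>\<in>outer D 1 b 1 N. eps D hm (N - n - 1) n * nsq D 1 N (slc D 1 N \<phi> \<rho>))"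
  proof (rule sum_mono)
    fix \<rho> assume \<rho>: "\<rho> \<in> outer D 1 b 1 N"
    have g: "slc D 1 N \<phi> \<rho> \<in> gs D hm 1 N 1 (N - n)" by (rule gs_slice[OF a Nb a LN \<rho> phi])
    have o: "Gp D hm 1 N 1 N (slc D 1 N \<phi> \<rho>) = 0"
      using Gp_slice[OF a Nb a order_refl \<rho>, of hm \<phi>] orth slc_zero by simp
    show "Re (inner_sp D 1 N (slc D 1 N \<phi> \<rho>) (Gp D hm 1 N (N - n) N (slc D 1 N \<phi> \<rho>)))
        \<le> eps D hm (N - n - 1) n * nsq D 1 N (slc D 1 N \<phi> \<rho>)"
      by (rule eps_slice_shift[OF g o])
  qed
  also have "\<dots> = eps D hm (N - n - 1) n * nsq D 1 b \<phi>"
    unfolding nsq_slice[OF a Nb, of D \<phi>] sum_distrib_left ..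
  finally show ?thesis .
qed


lemma main_ind:
  fixes D :: nat and hm and m n :: int and \<gamma> s t :: real
  assumes pos: "positive_int D hm" and m1: "1 \<le> m" and mn: "m \<le> n"
    and g0: "\<gamma> \<ge> 0" and gk: "\<And>k. 2 \<le> k \<Longrightarrow> k \<le> m + n \<Longrightarrow> \<gamma> \<le> gap D hm 1 k"
    and st: "s\<^sup>2 + t\<^sup>2 = 1" and s0: "s \<ge> 0" and t0: "t \<ge> 0" and ts: "t < s"
    and ek: "\<And>m'. m \<le> m' \<Longrightarrow> eps D hm m' n \<le> t\<^sup>2"
  shows "1 \<le> N \<Longrightarrow> N \<le> b \<Longrightarrow> \<psi> \<in> vecs D 1 b \<Longrightarrow> Gp D hm 1 b 1 N \<psi> = 0 \<Longrightarrow>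
    \<gamma> * ((s - t)\<^sup>2 * nsq D 1 b (\<psi> - Gp D hm 1 b 1 (N - n) \<psi>) + s * (s - t) * nsq D 1 b (Gp D hm 1 b 1 (N - n) \<psi>))
      \<le> Re (inner_sp D 1 b \<psi> (Ham D hm 1 b 1 N \<psi>))"
proof (induction "nat N" arbitrary: N b \<psi> rule: less_induct)
  case less
  note N1 = less.prems(1) and Nb = less.prems(2) and psi = less.prems(3) and orth = less.prems(4)
  define \<alpha> where "\<alpha> = (s - t)\<^sup>2"
  define \<beta> where "\<beta> = s * (s - t)"
  have a0: "\<alpha> \<ge> 0" unfolding \<alpha>_def by simp
  have b0: "\<beta> \<ge> 0" unfolding \<beta>_def using s0 ts by simp
  have a1: "\<alpha> \<le> 1"
  proof -
    have "\<alpha> = 1 - 2 * s * t" unfolding \<alpha>_def using st by (simp add: power2_eq_square algebra_simps)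
    then show ?thesis using s0 t0 by simp
  qed
  have b1: "\<beta> \<le> 1"
  proof -
    have "\<beta> = s\<^sup>2 - s * t" unfolding \<beta>_def by (simp add: power2_eq_square algebra_simps)
    also have "\<dots> \<le> s\<^sup>2" using s0 t0 by simp
    also have "\<dots> \<le> 1" using st by (smt (verit) zero_le_power2)
    finally show ?thesis .
  qed
  let ?E = "Gp D hm 1 b 1 (N - n)"
  have Es: "subsp D 1 b (gs D hm 1 b 1 (N - n))" by (rule gs_subsp)
  have pyE: "nsq D 1 b \<psi> = nsq D 1 b (\<psi> - ?E \<psi>) + nsq D 1 b (?E \<psi>)"
    unfolding Gp_def using proj_pyth[OF Es, of \<psi>] by simp
  show ?case
  proof (cases "N \<le> m + n")
    case True
    show ?thesis
    proof (cases "N = 1")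
      case True
      have "Gp D hm 1 b 1 N \<psi> = \<psi>"
        unfolding Gp_def True by (rule proj_id[OF gs_subsp]) (use psi Ham_empty in \<open>simp add: gs_iff\<close>)
      then have z: "\<psi> = 0" using orth by simp
      have "?E 0 = 0" unfolding Gp_def by (rule proj_zero[OF gs_subsp])
      then show ?thesis unfolding z by (simp add: nsq_def Ham_zero)
    next
      case False
      then have N2: "2 \<le> N" using N1 by simp
      have "gap D hm 1 N * nsq D 1 b (\<psi> - Gp D hm 1 b 1 N \<psi>) \<le> Re (inner_sp D 1 b \<psi> (Ham D hm 1 b 1 N \<psi>))"
        by (rule gap_big[OF pos _ Nb psi]) simp
      then have h1: "gap D hm 1 N * nsq D 1 b \<psi> \<le> Re (inner_sp D 1 b \<psi> (Ham D hm 1 b 1 N \<psi>))"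
        using orth by simp
      have "\<gamma> * nsq D 1 b \<psi> \<le> gap D hm 1 N * nsq D 1 b \<psi>"
        using gk[OF N2 \<open>N \<le> m + n\<close>] nsq_nonneg by (simp add: mult_right_mono)
      moreover have "\<gamma> * (\<alpha> * nsq D 1 b (\<psi> - ?E \<psi>) + \<beta> * nsq D 1 b (?E \<psi>)) \<le> \<gamma> * nsq D 1 b \<psi>"
      proof -
        have "\<alpha> * nsq D 1 b (\<psi> - ?E \<psi>) \<le> nsq D 1 b (\<psi> - ?E \<psi>)"
          by (rule mult_left_le_one_le[OF nsq_nonneg a0 a1])
        moreover have "\<beta> * nsq D 1 b (?E \<psi>) \<le> nsq D 1 b (?E \<psi>)"
          by (rule mult_left_le_one_le[OF nsq_nonneg b0 b1])
        ultimately show ?thesis unfolding pyE using g0 by (simp add: mult_left_mono)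
      qed
      ultimately show ?thesis using h1 unfolding \<alpha>_def \<beta>_def by linarith
    qed
  next
    case False
    then have Nbig: "N \<ge> m + n + 1" by simp
    define L where "L = N - n"
    define K where "K = N - 2 * n"
    have L2: "L \<ge> 2" "L \<le> N" "K + 1 \<le> L" "L - n = K" unfolding L_def K_def using Nbig m1 mn by simp_all
    let ?E' = "Gp D hm 1 b 1 K"
    let ?F = "Gp D hm 1 b L N"
    have E's: "subsp D 1 b (gs D hm 1 b 1 K)" by (rule gs_subsp)
    have Fs: "subsp D 1 b (gs D hm 1 b L N)" by (rule gs_subsp)
    define \<psi>1 where "\<psi>1 = \<psi> - ?E \<psi>"
    define \<psi>2 where "\<psi>2 = ?E \<psi>"
    have psi12: "\<psi> = \<psi>1 + \<psi>2" unfolding \<psi>1_def \<psi>2_def by simp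
    have v1: "\<psi>1 \<in> vecs D 1 b" unfolding \<psi>1_def Gp_def by (rule vecs_diff[OF psi proj_vecs[OF Es]])
    have v2: "\<psi>2 \<in> vecs D 1 b" unfolding \<psi>2_def Gp_def by (rule proj_vecs[OF Es])
    have g2: "\<psi>2 \<in> gs D hm 1 b 1 L" unfolding \<psi>2_def Gp_def L_def by (rule proj_in[OF Es])
    have LNb: "L \<le> b" "N \<le> b" using L2 Nb by simp_all
    have Hsplit: "Ham D hm 1 b 1 N \<psi> = Ham D hm 1 b 1 L \<psi> + Ham D hm 1 b L N \<psi>"
      by (rule Ham_split) (use L2 in simp_all)
    have H2: "Ham D hm 1 b 1 L \<psi>2 = 0" using g2 by (simp add: gs_iff)
    have HL: "inner_sp D 1 b \<psi> (Ham D hm 1 b 1 L \<psi>) = inner_sp D 1 b \<psi>1 (Ham D hm 1 b 1 L \<psi>1)"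
    proof -
      have "inner_sp D 1 b \<psi>2 (Ham D hm 1 b 1 L \<psi>1) = inner_sp D 1 b (Ham D hm 1 b 1 L \<psi>2) \<psi>1"
        by (rule Ham_herm[OF pos _ LNb(1) v2 v1]) simp
      then have "inner_sp D 1 b \<psi>2 (Ham D hm 1 b 1 L \<psi>1) = 0" using H2 by simp
      then show ?thesis unfolding psi12 Ham_add H2 inner_add_left by simp
    qed
    have E1: "Gp D hm 1 b 1 L \<psi>1 = 0"
      unfolding \<psi>1_def Gp_def L_def proj_diff[OF Es] proj_id[OF Es proj_in[OF Es]] by simp
    have IH: "\<gamma> * ((s - t)\<^sup>2 * nsq D 1 b (\<psi>1 - ?E' \<psi>1) + s * (s - t) * nsq D 1 b (?E' \<psi>1))
      \<le> Re (inner_sp D 1 b \<psi>1 (Ham D hm 1 b 1 L \<psi>1))"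
    proof -
      have "nat L < nat N" using L2 m1 mn N1 unfolding L_def by simp
      from less.hyps[OF this _ _ v1 E1] L2 LNb show ?thesis by simp
    qed
    have R: "\<gamma> * nsq D 1 b (\<psi> - ?F \<psi>) \<le> Re (inner_sp D 1 b \<psi> (Ham D hm 1 b L N \<psi>))"
    proof -
      have "gap D hm 1 (n + 1) * nsq D 1 b (\<psi> - ?F \<psi>) \<le> Re (inner_sp D 1 b \<psi> (Ham D hm 1 b L N \<psi>))"
        by (rule gap_big_shift[OF pos _ LNb(2) psi, where t="L - 1"]) (use L2 in \<open>simp_all add: L_def\<close>)
      moreover have "\<gamma> \<le> gap D hm 1 (n + 1)" by (rule gk) (use m1 mn in simp_all)
      ultimately show ?thesis using nsq_nonneg[of D 1 b "\<psi> - ?F \<psi>"] by (smt (verit) mult_right_mono)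
    qed
    have comm: "?E' (?F f) = ?F (?E' f)" if f: "f \<in> vecs D 1 b" for f
      by (rule Gp_comm[OF pos _ L2(3) LNb(2) L2(2) f]) simp
    define \<phi>1 where "\<phi>1 = ?E' \<psi>1"
    define \<phi>2 where "\<phi>2 = \<psi>2"
    have gsKL: "gs D hm 1 b 1 L \<subseteq> gs D hm 1 b 1 K"
      by (rule gs_mono[OF pos]) (use L2 LNb in simp_all)
    have E'2: "?E' \<psi>2 = \<psi>2" unfolding Gp_def by (rule proj_id[OF E's]) (use g2 gsKL in blast)
    have E'psi: "?E' \<psi> = \<phi>1 + \<phi>2"
      unfolding \<phi>1_def \<phi>2_def using E'2 psi12 Gp_def proj_add[OF E's] by metis
    have W: "nsq D 1 b ((\<phi>1 + \<phi>2) - ?F (\<phi>1 + \<phi>2)) \<le> nsq D 1 b (\<psi> - ?F \<psi>)"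
    proof -
      have "?E' (\<psi> - ?F \<psi>) = ?E' \<psi> - ?F (?E' \<psi>)"
        unfolding Gp_def proj_diff[OF E's] using comm[OF psi] unfolding Gp_def by simp
      then have "(\<phi>1 + \<phi>2) - ?F (\<phi>1 + \<phi>2) = ?E' (\<psi> - ?F \<psi>)" unfolding E'psi by simp
      then show ?thesis unfolding Gp_def using proj_nsq_le[OF E's] by metis
    qed
    have ph1v: "\<phi>1 \<in> vecs D 1 b" unfolding \<phi>1_def Gp_def by (rule proj_vecs[OF E's])
    have ph2v: "\<phi>2 \<in> vecs D 1 b" unfolding \<phi>2_def by (rule v2)
    have orth12: "inner_sp D 1 b \<phi>1 \<phi>2 = 0"
    proof -
      have "inner_sp D 1 b \<phi>1 \<phi>2 = inner_sp D 1 b \<psi>1 (?E' \<psi>2)"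
        unfolding \<phi>1_def \<phi>2_def Gp_def by (rule proj_self_adj[OF E's])
      also have "\<dots> = inner_sp D 1 b \<psi>1 \<psi>2" using E'2 by simp
      also have "\<dots> = 0"
      proof -
        have "inner_sp D 1 b \<psi>2 \<psi>1 = 0"
          unfolding \<psi>1_def \<psi>2_def Gp_def by (rule proj_orth[OF Es proj_in[OF Es]])
        then show ?thesis using inner_cnj[of D 1 b \<psi>2 \<psi>1] by simp
      qed
      finally show ?thesis .
    qed
    have epsb: "nsq D 1 b (?F \<phi>2) \<le> t\<^sup>2 * nsq D 1 b \<phi>2"
    proof -
      have o: "Gp D hm 1 b 1 N \<phi>2 = 0"
      proof -
        have sub: "gs D hm 1 b 1 N \<subseteq> gs D hm 1 b 1 L"
          by (rule gs_mono[OF pos]) (use L2 LNb in simp_all)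
        have "Gp D hm 1 b 1 N \<phi>2 = Gp D hm 1 b 1 N \<psi>"
          unfolding \<phi>2_def \<psi>2_def Gp_def L_def[symmetric] by (rule proj_nested2[OF gs_subsp gs_subsp sub])
        then show ?thesis using orth by simp
      qed
      have "Re (inner_sp D 1 b \<phi>2 (Gp D hm 1 b (N - n) N \<phi>2)) \<le> eps D hm (N - n - 1) n * nsq D 1 b \<phi>2"
        by (rule eps_big[OF _ _ Nb _ o]) (use L2 mn m1 g2 in \<open>simp_all add: L_def \<phi>2_def\<close>)
      moreover have "eps D hm (N - n - 1) n \<le> t\<^sup>2" by (rule ek) (use Nbig in simp)
      moreover have "Re (inner_sp D 1 b \<phi>2 (?F \<phi>2)) = nsq D 1 b (?F \<phi>2)"
        unfolding Gp_def proj_quad[OF Fs] by simp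
      ultimately show ?thesis using nsq_nonneg[of D 1 b \<phi>2] unfolding L_def
        by (smt (verit) mult_right_mono)
    qed
    have VLi: "nsq D 1 b ((\<phi>1 + \<phi>2) - ?F (\<phi>1 + \<phi>2)) + t * (s - t) * nsq D 1 b \<phi>1 \<ge> s * (s - t) * nsq D 1 b \<phi>2"
      using VL[OF Fs ph1v ph2v orth12 _ st s0 t0 ts] epsb unfolding Gp_def by blast
    have py1: "nsq D 1 b \<psi>1 = nsq D 1 b (\<psi>1 - ?E' \<psi>1) + nsq D 1 b \<phi>1"
      unfolding \<phi>1_def Gp_def using proj_pyth[OF E's, of \<psi>1] by simp
    have ab: "\<beta> - \<alpha> = t * (s - t)" unfolding \<alpha>_def \<beta>_def by (simp add: power2_eq_square algebra_simps)
    have total: "Re (inner_sp D 1 b \<psi> (Ham D hm 1 b 1 N \<psi>))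
        = Re (inner_sp D 1 b \<psi>1 (Ham D hm 1 b 1 L \<psi>1)) + Re (inner_sp D 1 b \<psi> (Ham D hm 1 b L N \<psi>))"
      unfolding Hsplit inner_add_right HL by simp
    have fin: "\<alpha> * nsq D 1 b \<psi>1 + \<beta> * nsq D 1 b \<psi>2
        \<le> (\<alpha> * nsq D 1 b (\<psi>1 - ?E' \<psi>1) + \<beta> * nsq D 1 b \<phi>1) + nsq D 1 b (\<psi> - ?F \<psi>)"
    proof -
      have cb: "t * (s - t) * nsq D 1 b \<phi>1 = \<beta> * nsq D 1 b \<phi>1 - \<alpha> * nsq D 1 b \<phi>1"
        by (simp add: ab[symmetric] left_diff_distrib)
      have bb: "s * (s - t) * nsq D 1 b \<phi>2 = \<beta> * nsq D 1 b \<phi>2" unfolding \<beta>_def ..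
      have py1': "\<alpha> * nsq D 1 b \<psi>1 = \<alpha> * nsq D 1 b (\<psi>1 - ?E' \<psi>1) + \<alpha> * nsq D 1 b \<phi>1"
        unfolding py1 by (simp add: distrib_left)
      show ?thesis using VLi W cb bb py1' unfolding \<phi>2_def by linarith
    qed
    have "\<gamma> * (\<alpha> * nsq D 1 b \<psi>1 + \<beta> * nsq D 1 b \<psi>2)
        \<le> \<gamma> * ((\<alpha> * nsq D 1 b (\<psi>1 - ?E' \<psi>1) + \<beta> * nsq D 1 b \<phi>1) + nsq D 1 b (\<psi> - ?F \<psi>))"
      using fin g0 by (rule mult_left_mono)
    also have "\<dots> \<le> Re (inner_sp D 1 b \<psi> (Ham D hm 1 b 1 N \<psi>))"
      unfolding total using IH R unfolding \<alpha>_def \<beta>_def \<phi>1_def by (simp add: distrib_left)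
    finally show ?thesis unfolding \<alpha>_def \<beta>_def \<psi>1_def \<psi>2_def .
  qed
qed


theorem theorem2p1:
  fixes D :: nat and hm :: "nat \<Rightarrow> nat \<Rightarrow> nat \<Rightarrow> nat \<Rightarrow> complex"
    and m n N :: int and \<psi> :: vec
  assumes "D \<ge> 2"
    and "positive_int D hm"
    and "frustration_free D hm"
    and "1 \<le> m" and "m \<le> n"
    and "eps_mn D hm m n < 1/2"
    and "N \<ge> 2"
    and "\<psi> \<in> vecs D 1 N"
    and "\<forall>u\<in>gs D hm 1 N 1 N. inner_sp D 1 N u \<psi> = 0"
  shows "let \<psi>2 = Gp D hm 1 N 1 (N - n) \<psi>;
             \<psi>1 = (\<lambda>\<sigma>. \<psi> \<sigma> - \<psi>2 \<sigma>);
             \<epsilon> = eps_mn D hm m n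
         in Re (inner_sp D 1 N \<psi> (Ham D hm 1 N 1 N \<psi>))
            \<ge> gapN D hm (m + n) * (alpha \<epsilon> * (norm_sp D 1 N \<psi>1)^2 + beta \<epsilon> * (norm_sp D 1 N \<psi>2)^2)"
proof -
  note pos = assms(2) and m1 = assms(4) and mn = assms(5) and eh = assms(6) and N2 = assms(7)
    and psi = assms(8) and orth0 = assms(9)
  define \<epsilon> where "\<epsilon> = eps_mn D hm m n"
  define \<gamma> where "\<gamma> = gapN D hm (m + n)"
  define s where "s = sqrt (1 - \<epsilon>)"
  define t where "t = sqrt \<epsilon>"
  define E where "E = Gp D hm 1 N 1 (N - n) \<psi>"
  have e0: "\<epsilon> \<ge> 0" unfolding \<epsilon>_def using eps_mn_ge[of m m D hm n] eps_ge0[of D hm m n] by simp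
  have e12: "\<epsilon> < 1/2" using eh unfolding \<epsilon>_def .
  have st: "s\<^sup>2 + t\<^sup>2 = 1" unfolding s_def t_def using e0 e12 by (simp add: real_sqrt_pow2)
  have s0: "s \<ge> 0" and t0: "t \<ge> 0" unfolding s_def t_def using e0 e12 by simp_all
  have ts: "t < s" unfolding s_def t_def using e12 by simp
  have ek: "\<And>m'. m \<le> m' \<Longrightarrow> eps D hm m' n \<le> t\<^sup>2"
    unfolding t_def using e0 eps_mn_ge unfolding \<epsilon>_def by simp
  have gk: "\<And>k. 2 \<le> k \<Longrightarrow> k \<le> m + n \<Longrightarrow> \<gamma> \<le> gap D hm 1 k"
    unfolding \<gamma>_def gapN_def by (rule Min_le) auto
  have orth: "Gp D hm 1 N 1 N \<psi> = 0"
    using orth0 unfolding Gp_def proj_orth_zero[OF gs_subsp] .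
  have al: "alpha \<epsilon> = (s - t)\<^sup>2" unfolding alpha_def s_def t_def ..
  have be: "beta \<epsilon> = s * (s - t)" unfolding beta_def s_def t_def ..
  have fd: "(\<lambda>\<sigma>. \<psi> \<sigma> - E \<sigma>) = \<psi> - E" by (rule ext) simp
  have n1: "(norm_sp D 1 N (\<psi> - E))\<^sup>2 = nsq D 1 N (\<psi> - E)"
    unfolding norm_sp_def nsq_def[symmetric] using nsq_nonneg by simp
  have n2: "(norm_sp D 1 N E)\<^sup>2 = nsq D 1 N E"
    unfolding norm_sp_def nsq_def[symmetric] using nsq_nonneg by simp
  have goal: "\<gamma> * ((s - t)\<^sup>2 * nsq D 1 N (\<psi> - E) + s * (s - t) * nsq D 1 N E)
      \<le> Re (inner_sp D 1 N \<psi> (Ham D hm 1 N 1 N \<psi>))"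
  proof (cases "\<gamma> \<ge> 0")
    case True
    show ?thesis unfolding E_def
      by (rule main_ind[OF pos m1 mn True gk st s0 t0 ts ek _ order_refl psi orth]) (use N2 in simp_all)
  next
    case False
    have "(s - t)\<^sup>2 * nsq D 1 N (\<psi> - E) + s * (s - t) * nsq D 1 N E \<ge> 0"
      using s0 ts nsq_nonneg by simp
    then have "\<gamma> * ((s - t)\<^sup>2 * nsq D 1 N (\<psi> - E) + s * (s - t) * nsq D 1 N E) \<le> 0"
      using False by (simp add: mult_nonpos_nonneg)
    moreover have "Re (inner_sp D 1 N \<psi> (Ham D hm 1 N 1 N \<psi>)) \<ge> 0"
      using Ham_psd[OF pos, of 1 1 N N \<psi>] by simp
    ultimately show ?thesis by linarith
  qed
  show ?thesis
    unfolding Let_def E_def[symmetric] \<epsilon>_def[symmetric] \<gamma>_def[symmetric] fd n1 n2 al be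
    using goal by simp
qed

end
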